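(* Under the hypotheses of Theorem 1 (walk $\{S_n\}$, stationary scenery $\{\xi(k)\}$ independent of the walk, $n\mathbb{P}(\xi(0)>u_n)\to\tau\ge0$, conditions $D(u_n)$ and $D'(u_n)$ with sequences $(\alpha_{n,l})$, $(l_n)$, $(k_n)$), and with the blocks $B_j$ and $K_n$ defined in the context, for almost every realization of $\{S_n,n\in\mathbb{N}_+\}$, $$\prod_{j\le K_n}\mathbb{P}(M_{B_j}\le u_n)\xrightarrow[n\to\infty]{}e^{-\tau q},$$ where $q=\mathbb{P}(\forall k\in\mathbb{N}_+,\ S_k\ne0)$ and the probabilities are with respect to the scenery, with the realization of the walk fixed.
   Context: Setting: $\{X_k\}$ centered integer-valued i.i.d., in the domain of attraction of an $\alpha$-stable law with $\alpha\in(0,1)$, $S_n=X_1+\cdots+X_n$; $\{\xi(k),k\in\mathbb{Z}\}$ stationary real random variables independent of $\{X_k\}$; $n\mathbb{P}(\xi(0)>u_n)\to\tau\ge0$. Condition $D(u_n)$: with $F_{i_1,\ldots,i_p}(u)=\mathbb{P}(\xi(i_1)\le u,\ldots,\xi(i_p)\le u)$, there exist $(\alpha_{n,l})_{(n,l)\in\mathbb{N}^2}$ and positive integers $(l_n)$ with $\alpha_{n,l_n}\to0$, $l_n=o(n)$, such that $|F_{i_1,\ldots,i_p,j_1,\ldots,j_{p'}}(u_n)-F_{i_1,\ldots,i_p}(u_n)F_{j_1,\ldots,j_{p'}}(u_n)|\le\alpha_{n,l}$ whenever $i_1<\cdots<i_p<j_1<\cdots<j_{p'}$ and $j_1-i_p\ge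 l$, uniformly in $p,p'$. Condition $D'(u_n)$: there exist integers $(k_n)$ with $k_n\to\infty$, $\frac{n^2}{k_n}\alpha_{n,l_n}\to0$, $k_nl_n=o(n)$, and $n\sum_{j=1}^{\lfloor n/k_n\rfloor}\mathbb{P}(\xi(0)>u_n,\xi(j)>u_n)\to0$. Notation: for $B\subset\mathbb{Z}$, $M_B=\max_{k\in B}\xi(k)$ (with $M_\emptyset=-\infty$). For a fixed realization of the walk, $\mathcal{S}_n=\{S_1,\ldots,S_n\}$, $R_n=\#\mathcal{S}_n$, $r_n=\lfloor n/(k_n-1)\rfloor+1$, $K_n=\lfloor R_n/r_n\rfloor+1$. The blocks $B_1,\ldots,B_{K_n}$ are the unique subsets of $\mathcal{S}_n$ with $\bigcup_{j\le K_n}B_j=\mathcal{S}_n$, $\#B_i=r_n$ and $\max B_i<\min B_{i+1}$ for $i\le K_n-1$ (so $\#B_{K_n}=R_n-(K_n-1)r_n$ and $K_n\le k_n$). *)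

theory Defs
  imports "HOL-Probability.Probability"
begin

text \<open>An alpha-stable law (0 < alpha < 2, alpha \<noteq> 1 suffices here), given by its
  characteristic function exp(-c|t|^alpha (1 - i beta sgn t tan(pi alpha/2)) + i gamma t).\<close>
definition stable_law :: "real \<Rightarrow> real measure \<Rightarrow> bool" where
  "stable_law a L \<longleftrightarrow> real_distribution L \<and>
     (\<exists>c \<beta> \<gamma>. c > 0 \<and> -1 \<le> \<beta> \<and> \<beta> \<le> 1 \<and>
        (\<forall>t. char L t = exp (- complex_of_real (c * \<bar>t\<bar> powr a) *
               (1 - \<i> * complex_of_real (\<beta> * sgn t * tan (pi * a / 2)))
               + \<i> * complex_of_real (\<gamma> * t))))"

definition walk :: "(nat \<Rightarrow> 'a \<Rightarrow> int) \<Rightarrow> nat \<Rightarrow> 'a \<Rightarrow> int" where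
  "walk X n \<omega> = (\<Sum>k\<in>{1..n}. X k \<omega>)"

definition centered_stable_attraction ::
  "'a measure \<Rightarrow> (nat \<Rightarrow> 'a \<Rightarrow> int) \<Rightarrow> real \<Rightarrow> bool" where
  "centered_stable_attraction M X a \<longleftrightarrow>
     (\<exists>an :: nat \<Rightarrow> real. \<exists>L. (\<forall>n. an n > 0) \<and> stable_law a L \<and>
        weak_conv_m (\<lambda>n. distr M borel (\<lambda>\<omega>. real_of_int (walk X n \<omega>) / an n)) L)"

definition walk_range :: "(nat \<Rightarrow> 'a \<Rightarrow> int) \<Rightarrow> nat \<Rightarrow> 'a \<Rightarrow> int set" where
  "walk_range X n \<omega> = (\<lambda>j. walk X j \<omega>) ` {1..n}"

definition block_len :: "(nat \<Rightarrow> nat) \<Rightarrow> nat \<Rightarrow> nat" where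
  "block_len k n = n div (k n - 1) + 1"

definition num_blocks :: "(nat \<Rightarrow> 'a \<Rightarrow> int) \<Rightarrow> (nat \<Rightarrow> nat) \<Rightarrow> nat \<Rightarrow> 'a \<Rightarrow> nat" where
  "num_blocks X k n \<omega> = card (walk_range X n \<omega>) div block_len k n + 1"

text \<open>Block B_j (1 \<le> j \<le> K_n): the j-th group of r_n consecutive elements of the
  range, listed in increasing order (the last block may be smaller, possibly empty).\<close>
definition block :: "(nat \<Rightarrow> 'a \<Rightarrow> int) \<Rightarrow> (nat \<Rightarrow> nat) \<Rightarrow> nat \<Rightarrow> 'a \<Rightarrow> nat \<Rightarrow> int set" where
  "block X k n \<omega> j = set (take (block_len k n)
      (drop ((j - 1) * block_len k n) (sorted_list_of_set (walk_range X n \<omega>))))"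

text \<open>M_B = max of the scenery over B, with M_{empty} = -infinity.\<close>
definition blockmax :: "(int \<Rightarrow> 'b \<Rightarrow> real) \<Rightarrow> int set \<Rightarrow> 'b \<Rightarrow> ereal" where
  "blockmax \<xi> B x = (SUP i\<in>B. ereal (\<xi> i x))"

definition Fjoint :: "'b measure \<Rightarrow> (int \<Rightarrow> 'b \<Rightarrow> real) \<Rightarrow> int set \<Rightarrow> real \<Rightarrow> real" where
  "Fjoint N \<xi> I u = measure N {x \<in> space N. \<forall>i\<in>I. \<xi> i x \<le> u}"

definition stationary_field :: "'b measure \<Rightarrow> (int \<Rightarrow> 'b \<Rightarrow> real) \<Rightarrow> bool" where
  "stationary_field N \<xi> \<longleftrightarrow> (\<forall>I h. finite I \<longrightarrow>
     distr N (PiM I (\<lambda>_. borel)) (\<lambda>x. \<lambda>i\<in>I. \<xi> (i + h) x)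
   = distr N (PiM I (\<lambda>_. borel)) (\<lambda>x. \<lambda>i\<in>I. \<xi> i x))"

definition condition_D :: "'b measure \<Rightarrow> (int \<Rightarrow> 'b \<Rightarrow> real) \<Rightarrow> (nat \<Rightarrow> real)
    \<Rightarrow> (nat \<Rightarrow> nat \<Rightarrow> real) \<Rightarrow> (nat \<Rightarrow> nat) \<Rightarrow> bool" where
  "condition_D N \<xi> u \<alpha> l \<longleftrightarrow>
     (\<forall>n. l n > 0) \<and> (\<lambda>n. \<alpha> n (l n)) \<longlonglongrightarrow> 0 \<and>
     (\<lambda>n. real (l n) / real n) \<longlonglongrightarrow> 0 \<and>
     (\<forall>n m I J. finite I \<longrightarrow> finite J \<longrightarrow> I \<noteq> {} \<longrightarrow> J \<noteq> {} \<longrightarrow>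
        Max I < Min J \<longrightarrow> Min J - Max I \<ge> int m \<longrightarrow>
        \<bar>Fjoint N \<xi> (I \<union> J) (u n) - Fjoint N \<xi> I (u n) * Fjoint N \<xi> J (u n)\<bar> \<le> \<alpha> n m)"

definition condition_D' :: "'b measure \<Rightarrow> (int \<Rightarrow> 'b \<Rightarrow> real) \<Rightarrow> (nat \<Rightarrow> real)
    \<Rightarrow> (nat \<Rightarrow> nat \<Rightarrow> real) \<Rightarrow> (nat \<Rightarrow> nat) \<Rightarrow> (nat \<Rightarrow> nat) \<Rightarrow> bool" where
  "condition_D' N \<xi> u \<alpha> l k \<longleftrightarrow>
     filterlim k at_top sequentially \<and>
     (\<lambda>n. (real n)^2 / real (k n) * \<alpha> n (l n)) \<longlonglongrightarrow> 0 \<and>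
     (\<lambda>n. real (k n * l n) / real n) \<longlonglongrightarrow> 0 \<and>
     (\<lambda>n. real n * (\<Sum>j\<in>{1..n div k n}.
         measure N {x \<in> space N. \<xi> 0 x > u n \<and> \<xi> (int j) x > u n})) \<longlonglongrightarrow> 0"

end

theory Submission
  imports Defs
begin

definition SP :: "(nat \<Rightarrow> int) measure" where
  "SP = PiM UNIV (\<lambda>_. count_space UNIV)"

definition th :: "(nat \<Rightarrow> int) \<Rightarrow> (nat \<Rightarrow> int)" where
  "th s = (\<lambda>i. s (Suc i))"

definition shz :: "(nat \<Rightarrow> 'a \<Rightarrow> int) \<Rightarrow> nat \<Rightarrow> 'a \<Rightarrow> nat \<Rightarrow> int" where
  "shz Z k \<omega> = (\<lambda>i. Z (k + i) \<omega>)"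

lemma space_SP: "space SP = UNIV"
  by (simp add: SP_def space_PiM)

lemma th_measurable[measurable]: "th \<in> measurable SP SP"
  unfolding th_def SP_def
  by (rule measurable_PiM_single') (auto simp: space_PiM)

lemma comp_measurable_SP[measurable]: "(\<lambda>s. s i) \<in> measurable SP (count_space UNIV)"
  unfolding SP_def by simp

lemma th_pow_measurable: "(th ^^ n) \<in> measurable SP SP"
  apply (induction n)
   apply simp
  apply (simp only: funpow.simps)
  apply (rule measurable_comp[OF _ th_measurable])
  apply assumption
  done

lemma shz_Suc: "shz Z (Suc k) \<omega> = th (shz Z k \<omega>)"
  by (simp add: shz_def th_def)

lemma shz_pow: "shz Z k \<omega> = (th ^^ k) (shz Z 0 \<omega>)"
  apply (induction k)
   apply (simp add: shz_def)
  apply (simp add: shz_Suc)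
  done

locale iidseq = prob_space M for M :: "'a measure" +
  fixes Z :: "nat \<Rightarrow> 'a \<Rightarrow> int"
  assumes Z_rv: "\<And>i. Z i \<in> measurable M (count_space UNIV)"
  and Z_ind: "indep_vars (\<lambda>_. count_space UNIV) Z UNIV"
  and Z_id: "\<And>i. distr M (count_space UNIV) (Z i) = distr M (count_space UNIV) (Z 0)"
begin

lemma shz_measurable[measurable]: "shz Z k \<in> measurable M SP"
  unfolding shz_def SP_def
  by (rule measurable_PiM_single') (auto simp: space_PiM Z_rv)

lemma prob_Z: "prob (Z i -` B \<inter> space M) = prob (Z 0 -` B \<inter> space M)"
proof -
  have "measure (distr M (count_space UNIV) (Z i)) B = measure (distr M (count_space UNIV) (Z 0)) B"
    by (simp only: Z_id[of i])
  then show ?thesis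
    using Z_rv[of i] Z_rv[of 0] by (simp add: measure_distr)
qed

lemma prob_cyl:
  assumes J: "finite J"
  shows "prob {\<omega> \<in> space M. \<forall>j\<in>J. Z (k + j) \<omega> \<in> A j} = (\<Prod>j\<in>J. prob (Z 0 -` A j \<inter> space M))"
proof (cases "J = {}")
  case True then show ?thesis by (simp add: prob_space)
next
  case False
  have ind: "indep_sets (\<lambda>i. {Z i -` A \<inter> space M | A. A \<in> sets (count_space UNIV)}) UNIV"
    using Z_ind unfolding indep_vars_def2 by simp
  have eq: "{\<omega> \<in> space M. \<forall>j\<in>J. Z (k + j) \<omega> \<in> A j} = (\<Inter>i\<in>(\<lambda>j. k + j) ` J. Z i -` A (i - k) \<inter> space M)"
    using False by auto
  have "prob (\<Inter>i\<in>(\<lambda>j. k + j) ` J. Z i -` A (i - k) \<inter> space M)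
      = (\<Prod>i\<in>(\<lambda>j. k + j) ` J. prob (Z i -` A (i - k) \<inter> space M))"
    by (rule indep_setsD[OF ind]) (use False J in auto)
  also have "\<dots> = (\<Prod>j\<in>J. prob (Z (k + j) -` A j \<inter> space M))"
    by (subst prod.reindex) (auto simp: inj_on_def)
  also have "\<dots> = (\<Prod>j\<in>J. prob (Z 0 -` A j \<inter> space M))"
    by (intro prod.cong refl prob_Z)
  finally show ?thesis using eq by simp
qed

lemma distr_shz: "distr M SP (shz Z k) = distr M SP (shz Z 0)"
proof (rule measure_eqI_PiM_infinite)
  show "sets (distr M SP (shz Z k)) = sets (PiM UNIV (\<lambda>_. count_space UNIV))"
    "sets (distr M SP (shz Z 0)) = sets (PiM UNIV (\<lambda>_. count_space UNIV))"
    by (simp_all add: SP_def)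
  show "finite_measure (distr M SP (shz Z k))"
    using prob_space_distr[of "shz Z k" SP] by (simp add: prob_space_def)
  fix A :: "nat \<Rightarrow> int set" and J :: "nat set"
  assume J: "finite J"
  have "\<And>k. emeasure (distr M SP (shz Z k)) (prod_emb UNIV (\<lambda>_. count_space UNIV) J (Pi\<^sub>E J A))
      = ennreal (\<Prod>j\<in>J. prob (Z 0 -` A j \<inter> space M))"
  proof -
    fix k
    have m: "prod_emb UNIV (\<lambda>_. count_space UNIV) J (Pi\<^sub>E J A) \<in> sets SP"
      unfolding SP_def using J by (intro sets_PiM_I) auto
    have "emeasure (distr M SP (shz Z k)) (prod_emb UNIV (\<lambda>_. count_space UNIV) J (Pi\<^sub>E J A))
        = emeasure M (shz Z k -` (prod_emb UNIV (\<lambda>_. count_space UNIV) J (Pi\<^sub>E J A)) \<inter> space M)"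
      using m by (simp add: emeasure_distr)
    also have "shz Z k -` (prod_emb UNIV (\<lambda>_. count_space UNIV) J (Pi\<^sub>E J A)) \<inter> space M
        = {\<omega> \<in> space M. \<forall>j\<in>J. Z (k + j) \<omega> \<in> A j}"
      by (auto simp: prod_emb_def shz_def PiE_iff)
    also have "emeasure M \<dots> = ennreal (prob {\<omega> \<in> space M. \<forall>j\<in>J. Z (k + j) \<omega> \<in> A j})"
      by (simp add: emeasure_eq_measure)
    finally show "?thesis k" using prob_cyl[OF J] by simp
  qed
  then show "emeasure (distr M SP (shz Z k)) (prod_emb UNIV (\<lambda>_. count_space UNIV) J (Pi\<^sub>E J A))
      = emeasure (distr M SP (shz Z 0)) (prod_emb UNIV (\<lambda>_. count_space UNIV) J (Pi\<^sub>E J A))"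
    by simp
qed

lemma integral_shz:
  fixes F :: "(nat \<Rightarrow> int) \<Rightarrow> real"
  assumes "F \<in> borel_measurable SP"
  shows "(\<integral>\<omega>. F (shz Z k \<omega>) \<partial>M) = (\<integral>\<omega>. F (shz Z 0 \<omega>) \<partial>M)"
proof -
  have "(\<integral>\<omega>. F (shz Z k \<omega>) \<partial>M) = (\<integral>s. F s \<partial>distr M SP (shz Z k))"
    using assms by (simp add: integral_distr)
  also have "\<dots> = (\<integral>s. F s \<partial>distr M SP (shz Z 0))" by (simp only: distr_shz[of k])
  also have "\<dots> = (\<integral>\<omega>. F (shz Z 0 \<omega>) \<partial>M)"
    using assms by (simp add: integral_distr)
  finally show ?thesis .
qed

end

declare th_pow_measurable[measurable]

fun Phi :: "((nat \<Rightarrow> int) \<Rightarrow> real) \<Rightarrow> nat \<Rightarrow> (nat \<Rightarrow> int) \<Rightarrow> real" where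
  "Phi g 0 s = 0"
| "Phi g (Suc n) s = max 0 (g s + Phi g n (th s))"

lemma Phi_nonneg: "0 \<le> Phi g n s"
  by (cases n) auto

lemma Phi_mono: "Phi g n s \<le> Phi g (Suc n) s"
proof (induction n arbitrary: s)
  case 0 then show ?case by simp
next
  case (Suc n)
  have "g s + Phi g n (th s) \<le> g s + Phi g (Suc n) (th s)" using Suc by simp
  then show ?case by (simp add: max_def)
qed

lemma Phi_meas[measurable]:
  assumes [measurable]: "g \<in> borel_measurable SP"
  shows "Phi g n \<in> borel_measurable SP"
proof (induction n)
  case 0 then show ?case by simp
next
  case (Suc n)
  have [measurable]: "Phi g n \<in> borel_measurable SP" by fact
  have "(\<lambda>s. max 0 (g s + Phi g n (th s))) \<in> borel_measurable SP" by measurable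
  then show ?case by simp
qed

lemma Phi_bound:
  assumes "\<And>s. \<bar>g s\<bar> \<le> B"
  shows "Phi g n s \<le> real n * B"
proof (induction n arbitrary: s)
  case 0 then show ?case by simp
next
  case (Suc n)
  have B: "0 \<le> B" using assms[of s] by simp
  have "g s + Phi g n (th s) \<le> B + real n * B" using assms[of s] Suc[of "th s"] by simp
  then show ?case using B by (simp add: algebra_simps)
qed

lemma Phi_ge_sum:
  "j \<le> n \<Longrightarrow> (\<Sum>k<j. g ((th ^^ k) s)) \<le> Phi g n s"
proof (induction n arbitrary: s j)
  case 0 then show ?case by simp
next
  case (Suc n)
  show ?case
  proof (cases j)
    case 0 then show ?thesis by (simp add: Phi_nonneg)
  next
    case (Suc j')
    have "(\<Sum>k<j. g ((th ^^ k) s)) = g s + (\<Sum>k<j'. g ((th ^^ k) (th s)))"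
      unfolding Suc by (subst sum.lessThan_Suc_shift) (simp add: funpow_Suc_right del: funpow.simps)
    also have "\<dots> \<le> g s + Phi g n (th s)" using Suc.IH[of j' "th s"] Suc.prems Suc by simp
    finally show ?thesis by simp
  qed
qed

lemma Phi_zero:
  assumes "\<And>k. g ((th ^^ k) s) = 0"
  shows "Phi g n s = 0"
  using assms
proof (induction n arbitrary: s)
  case 0 then show ?case by simp
next
  case (Suc n)
  have "\<And>k. g ((th ^^ k) (th s)) = 0"
    using Suc.prems by (metis funpow_Suc_right o_apply)
  then have "Phi g n (th s) = 0" by (rule Suc.IH)
  moreover have "g s = 0" using Suc.prems[of 0] by simp
  ultimately show ?case by simp
qed

context iidseq
begin

lemma bounded_integrable:
  fixes f :: "'a \<Rightarrow> real"
  assumes "f \<in> borel_measurable M" "\<And>x. \<bar>f x\<bar> \<le> B"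
  shows "integrable M f"
  by (rule integrable_const_bound[where B=B]) (use assms in auto)

lemma maximal_lemma:
  assumes g[measurable]: "g \<in> borel_measurable SP" and gB: "\<And>s. \<bar>g s\<bar> \<le> B"
  shows "0 \<le> (\<integral>\<omega>. (if Phi g n (shz Z 0 \<omega>) > 0 then g (shz Z 0 \<omega>) else 0) \<partial>M)"
proof (cases n)
  case 0 then show ?thesis by simp
next
  case (Suc m)
  define F where "F = Phi g n"
  have F[measurable]: "F \<in> borel_measurable SP" unfolding F_def by measurable
  have B: "0 \<le> B" using gB[of undefined] by simp
  have FB: "\<bar>F s\<bar> \<le> real n * B" for s
    using Phi_bound[OF gB, where n=n and s=s] Phi_nonneg[of g n s] unfolding F_def by simp
  have pw: "F (shz Z 0 \<omega>) - F (shz Z 1 \<omega>) \<le> (if F (shz Z 0 \<omega>) > 0 then g (shz Z 0 \<omega>) else 0)" for \<omega>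
  proof -
    let ?s = "shz Z 0 \<omega>"
    have s1: "shz Z 1 \<omega> = th ?s" using shz_Suc[of Z 0 \<omega>] by simp
    have mono: "Phi g m (th ?s) \<le> F (th ?s)" unfolding F_def Suc by (rule Phi_mono)
    show ?thesis
    proof (cases "F ?s > 0")
      case True
      then have "F ?s = g ?s + Phi g m (th ?s)" unfolding F_def Suc by simp
      then show ?thesis using True mono s1 by simp
    next
      case False
      then have "F ?s = 0" using Phi_nonneg[of g n ?s] unfolding F_def by simp
      then show ?thesis using False s1 Phi_nonneg[of g n "th ?s"] unfolding F_def by simp
    qed
  qed
  have i0: "integrable M (\<lambda>\<omega>. F (shz Z k \<omega>))" for k
    by (rule bounded_integrable[OF _ FB]) measurable
  have "0 = (\<integral>\<omega>. F (shz Z 0 \<omega>) \<partial>M) - (\<integral>\<omega>. F (shz Z 1 \<omega>) \<partial>M)"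
    using integral_shz[OF F, of 1] by simp
  also have "\<dots> = (\<integral>\<omega>. F (shz Z 0 \<omega>) - F (shz Z 1 \<omega>) \<partial>M)"
    using i0 by (simp add: Bochner_Integration.integral_diff)
  also have "\<dots> \<le> (\<integral>\<omega>. (if F (shz Z 0 \<omega>) > 0 then g (shz Z 0 \<omega>) else 0) \<partial>M)"
  proof (rule integral_mono)
    show "integrable M (\<lambda>\<omega>. F (shz Z 0 \<omega>) - F (shz Z 1 \<omega>))" using i0 by simp
    show "integrable M (\<lambda>\<omega>. if F (shz Z 0 \<omega>) > 0 then g (shz Z 0 \<omega>) else 0)"
      by (rule bounded_integrable[where B=B]) (use gB B in auto)
    show "\<And>\<omega>. \<omega> \<in> space M \<Longrightarrow> F (shz Z 0 \<omega>) - F (shz Z 1 \<omega>) \<le> (if F (shz Z 0 \<omega>) > 0 then g (shz Z 0 \<omega>) else 0)"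
      by (rule pw)
  qed
  finally show ?thesis unfolding F_def .
qed

end

definition asum :: "((nat \<Rightarrow> int) \<Rightarrow> real) \<Rightarrow> (nat \<Rightarrow> int) \<Rightarrow> nat \<Rightarrow> real" where
  "asum g s n = (\<Sum>k<n. g ((th ^^ k) s))"

definition freqabove :: "(nat \<Rightarrow> real) \<Rightarrow> real \<Rightarrow> bool" where
  "freqabove x c \<longleftrightarrow> (\<exists>j::nat. \<forall>N. \<exists>n\<ge>N. x n > real n * (c + 1 / (real j + 1)))"

definition Aset :: "((nat \<Rightarrow> int) \<Rightarrow> real) \<Rightarrow> real \<Rightarrow> (nat \<Rightarrow> int) set" where
  "Aset g c = {s. freqabove (asum g s) c}"

lemma big_n:
  fixes \<delta> C c :: real
  assumes "0 < \<delta>" "real n \<ge> 2 * (C + \<bar>c\<bar> + 1) / \<delta>"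
  shows "real n * \<delta> \<ge> 2 * C + 2 * \<bar>c\<bar> + 2"
  using assms by (simp add: pos_divide_le_eq algebra_simps)

lemma freq_L1:
  assumes C: "\<And>n. \<bar>x n - y (Suc n)\<bar> \<le> C" and f: "freqabove x c"
  shows "freqabove y c"
proof -
  obtain j where j: "\<forall>N. \<exists>n\<ge>N. x n > real n * (c + 1 / (real j + 1))"
    using f unfolding freqabove_def by blast
  define \<delta> where "\<delta> = 1 / (real j + 1)"
  have d0: "0 < \<delta>" "\<delta> \<le> 1" unfolding \<delta>_def by (auto simp: field_simps)
  have d2: "1 / (real (2 * j + 1) + 1) = \<delta> / 2" unfolding \<delta>_def by (simp add: field_simps)
  have C0: "0 \<le> C" using C[of 0] by simp
  define N0 where "N0 = nat \<lceil>2 * (C + \<bar>c\<bar> + 1) / \<delta>\<rceil>"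
  have "\<exists>n\<ge>N. y n > real n * (c + \<delta> / 2)" for N
  proof -
    obtain n where n: "n \<ge> max N N0" "x n > real n * (c + \<delta>)"
      using j \<delta>_def by blast
    have "real n \<ge> 2 * (C + \<bar>c\<bar> + 1) / \<delta>"
      using n(1) unfolding N0_def by linarith
    then have nd: "real n * \<delta> \<ge> 2 * C + 2 * \<bar>c\<bar> + 2" using big_n d0 by blast
    have "y (Suc n) \<ge> x n - C" using C[of n] by linarith
    moreover have "real n * (c + \<delta>) - C - real (Suc n) * (c + \<delta> / 2) = real n * \<delta> / 2 - C - c - \<delta> / 2"
      by (simp add: algebra_simps)
    moreover have "c \<le> \<bar>c\<bar>" by simp
    then have "real n * \<delta> / 2 - C - c - \<delta> / 2 > 0" using nd d0 by linarith
    ultimately have "real (Suc n) * (c + \<delta> / 2) < real n * (c + \<delta>) - C" by linarith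
    then have "y (Suc n) > real (Suc n) * (c + \<delta> / 2)" using n(2) \<open>y (Suc n) \<ge> x n - C\<close> by linarith
    then show ?thesis using n(1) by (intro exI[of _ "Suc n"]) auto
  qed
  then have "\<forall>N. \<exists>n\<ge>N. y n > real n * (c + 1 / (real (2 * j + 1) + 1))" unfolding d2 by blast
  then show ?thesis unfolding freqabove_def by blast
qed

lemma freq_L2:
  assumes C: "\<And>n. \<bar>x n - y (Suc n)\<bar> \<le> C" and f: "freqabove y c"
  shows "freqabove x c"
proof -
  obtain j where j: "\<forall>N. \<exists>n\<ge>N. y n > real n * (c + 1 / (real j + 1))"
    using f unfolding freqabove_def by blast
  define \<delta> where "\<delta> = 1 / (real j + 1)"
  have d0: "0 < \<delta>" "\<delta> \<le> 1" unfolding \<delta>_def by (auto simp: field_simps)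
  have d2: "1 / (real (2 * j + 1) + 1) = \<delta> / 2" unfolding \<delta>_def by (simp add: field_simps)
  have C0: "0 \<le> C" using C[of 0] by simp
  define N0 where "N0 = nat \<lceil>2 * (C + \<bar>c\<bar> + 1) / \<delta>\<rceil>"
  have "\<exists>n\<ge>N. x n > real n * (c + \<delta> / 2)" for N
  proof -
    obtain n where n: "n \<ge> Suc (max N N0)" "y n > real n * (c + \<delta>)"
      using j \<delta>_def by blast
    then obtain m where m: "n = Suc m" "m \<ge> max N N0" by (cases n) auto
    have "real m \<ge> 2 * (C + \<bar>c\<bar> + 1) / \<delta>"
      using m(2) unfolding N0_def by linarith
    then have nd: "real m * \<delta> \<ge> 2 * C + 2 * \<bar>c\<bar> + 2" using big_n d0 by blast
    have "x m \<ge> y (Suc m) - C" using C[of m] by linarith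
    moreover have "real (Suc m) * (c + \<delta>) - C - real m * (c + \<delta> / 2) = real m * \<delta> / 2 + c + \<delta> - C"
      by (simp add: algebra_simps)
    moreover have "- c \<le> \<bar>c\<bar>" by simp
    then have "real m * \<delta> / 2 + c + \<delta> - C > 0" using nd d0 by linarith
    ultimately have "real m * (c + \<delta> / 2) < real (Suc m) * (c + \<delta>) - C" by linarith
    moreover have "y (Suc m) > real (Suc m) * (c + \<delta>)" using n(2) m(1) by simp
    ultimately have "x m > real m * (c + \<delta> / 2)" using \<open>x m \<ge> y (Suc m) - C\<close> by linarith
    then show ?thesis using m(2) by (intro exI[of _ m]) auto
  qed
  then have "\<forall>N. \<exists>n\<ge>N. x n > real n * (c + 1 / (real (2 * j + 1) + 1))" unfolding d2 by blast
  then show ?thesis unfolding freqabove_def by blast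
qed

lemma asum_th: "asum g (th s) n = asum g s (Suc n) - g s"
  unfolding asum_def
  by (subst sum.lessThan_Suc_shift) (simp add: funpow_Suc_right del: funpow.simps)

lemma Aset_th:
  assumes gB: "\<And>s. \<bar>g s\<bar> \<le> B"
  shows "th s \<in> Aset g c \<longleftrightarrow> s \<in> Aset g c"
proof -
  have C: "\<bar>asum g (th s) n - asum g s (Suc n)\<bar> \<le> B" for n
    using gB[of s] by (simp add: asum_th)
  show ?thesis unfolding Aset_def using freq_L1[of "asum g (th s)" "asum g s" B c, OF C] freq_L2[of "asum g (th s)" "asum g s" B c, OF C] by blast
qed

lemma Aset_pow:
  assumes gB: "\<And>s. \<bar>g s\<bar> \<le> B"
  shows "(th ^^ m) s \<in> Aset g c \<longleftrightarrow> s \<in> Aset g c"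
  by (induction m) (simp_all add: Aset_th[OF gB])

lemma Aset_sets:
  assumes [measurable]: "g \<in> borel_measurable SP"
  shows "Aset g c \<in> sets SP"
proof -
  have [measurable]: "(\<lambda>s. asum g s n) \<in> borel_measurable SP" for n
    unfolding asum_def by measurable
  have "{s \<in> space SP. \<exists>j::nat. \<forall>N::nat. \<exists>n::nat. N \<le> n \<and> asum g s n > real n * (c + 1 / (real j + 1))} \<in> sets SP"
    by measurable
  then show ?thesis unfolding Aset_def freqabove_def space_SP by simp
qed

context iidseq
begin

definition Fz :: "nat \<Rightarrow> 'a set set" where
  "Fz i = sigma_sets (space M) {Z i -` B \<inter> space M | B. B \<in> sets (count_space (UNIV::int set))}"

lemma Fz_indep: "indep_sets Fz UNIV"
  using Z_ind unfolding indep_vars_def Fz_def by simp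

lemma Fz_sa: "sigma_algebra (space M) (Fz i)"
  unfolding Fz_def by (rule sigma_algebra_sigma_sets) auto

lemma Fz_sub: "Fz i \<subseteq> Pow (space M)"
proof
  fix x assume "x \<in> Fz i"
  then have "x \<subseteq> space M"
    unfolding Fz_def by (rule sigma_sets_into_sp[rotated]) auto
  then show "x \<in> Pow (space M)" by simp
qed

lemma shz_tail_meas:
  "shz Z m \<in> measurable (sigma (space M) (\<Union>i\<in>{m..}. Fz i)) SP"
proof -
  let ?G = "\<Union>i\<in>{m..}. Fz i"
  have G: "?G \<subseteq> Pow (space M)" using Fz_sub by blast
  have sp: "space (sigma (space M) ?G) = space M" using G by simp
  have st: "sets (sigma (space M) ?G) = sigma_sets (space M) ?G" using G by simp
  have comp: "Z (m + i) \<in> measurable (sigma (space M) ?G) (count_space UNIV)" for i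
  proof (rule measurableI)
    show "\<And>x. x \<in> space (sigma (space M) ?G) \<Longrightarrow> Z (m + i) x \<in> space (count_space UNIV)" by simp
    fix B :: "int set"
    have "Z (m + i) -` B \<inter> space M \<in> Fz (m + i)"
      unfolding Fz_def by (rule sigma_sets.Basic) auto
    then have "Z (m + i) -` B \<inter> space M \<in> ?G" by auto
    then show "Z (m + i) -` B \<inter> space (sigma (space M) ?G) \<in> sets (sigma (space M) ?G)"
      unfolding sp st by (rule sigma_sets.Basic)
  qed
  show ?thesis
    unfolding shz_def SP_def
    by (rule measurable_PiM_single') (auto simp: space_PiM comp)
qed

lemma Aset_zero_one:
  assumes g[measurable]: "g \<in> borel_measurable SP" and gB: "\<And>s. \<bar>g s\<bar> \<le> B"
  shows "prob {\<omega> \<in> space M. shz Z 0 \<omega> \<in> Aset g c} = 0 \<or> prob {\<omega> \<in> space M. shz Z 0 \<omega> \<in> Aset g c} = 1"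
proof (rule kolmogorov_0_1_law[OF Fz_sa Fz_indep])
  let ?A = "{\<omega> \<in> space M. shz Z 0 \<omega> \<in> Aset g c}"
  have "?A \<in> sigma_sets (space M) (\<Union> (Fz ` {n..}))" for n
  proof -
    let ?G = "\<Union>i\<in>{n..}. Fz i"
    have G: "?G \<subseteq> Pow (space M)" using Fz_sub by blast
    have eq: "?A = shz Z n -` Aset g c \<inter> space (sigma (space M) ?G)"
      using G Aset_pow[OF gB, where m=n and c=c] by (auto simp: shz_pow[of Z n])
    have "shz Z n -` Aset g c \<inter> space (sigma (space M) ?G) \<in> sets (sigma (space M) ?G)"
      by (rule measurable_sets[OF shz_tail_meas Aset_sets[OF g]])
    then show ?thesis using G eq by simp
  qed
  then show "?A \<in> tail_events Fz" unfolding tail_events_def by blast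
qed

end

context iidseq
begin

lemma BUL_c:
  assumes g[measurable]: "g \<in> borel_measurable SP" and gB: "\<And>s. \<bar>g s\<bar> \<le> B"
    and c: "expectation (\<lambda>\<omega>. g (shz Z 0 \<omega>)) < c"
  shows "AE \<omega> in M. shz Z 0 \<omega> \<notin> Aset g c"
proof -
  define E0 where "E0 = expectation (\<lambda>\<omega>. g (shz Z 0 \<omega>))"
  define A where "A = {\<omega> \<in> space M. shz Z 0 \<omega> \<in> Aset g c}"
  have Asets[measurable]: "Aset g c \<in> sets SP" by (rule Aset_sets[OF g])
  have A_ev: "A \<in> events" unfolding A_def by measurable
  have B0: "0 \<le> B" using gB[of undefined] by simp
  have "prob A = 0"
  proof (rule ccontr)
    assume "prob A \<noteq> 0"
    then have pA: "prob A = 1" using Aset_zero_one[OF g gB, of c] unfolding A_def by blast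
    define h where "h s = (if s \<in> Aset g c then g s - c else 0)" for s
    have h[measurable]: "h \<in> borel_measurable SP" unfolding h_def by measurable
    have hB: "\<bar>h s\<bar> \<le> B + \<bar>c\<bar>" for s
      using gB[of s] B0 unfolding h_def by auto
    define E where "E n = {\<omega> \<in> space M. Phi h n (shz Z 0 \<omega>) > 0}" for n
    have E_ev[measurable]: "E n \<in> events" for n unfolding E_def by measurable
    have E_sub: "E n \<subseteq> A" for n
    proof
      fix \<omega> assume \<omega>: "\<omega> \<in> E n"
      show "\<omega> \<in> A"
      proof (rule ccontr)
        assume "\<omega> \<notin> A"
        then have ns: "shz Z 0 \<omega> \<notin> Aset g c" using \<omega> unfolding A_def E_def by auto
        have "h ((th ^^ k) (shz Z 0 \<omega>)) = 0" for k
          using ns Aset_pow[OF gB, where m=k and s="shz Z 0 \<omega>" and c=c] unfolding h_def by auto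
        then have "Phi h n (shz Z 0 \<omega>) = 0" by (rule Phi_zero)
        then show False using \<omega> unfolding E_def by simp
      qed
    qed
    have A_sub: "A \<subseteq> (\<Union>n. E n)"
    proof
      fix \<omega> assume \<omega>: "\<omega> \<in> A"
      let ?s = "shz Z 0 \<omega>"
      have sA: "?s \<in> Aset g c" using \<omega> unfolding A_def by simp
      then obtain j n where n: "asum g ?s n > real n * (c + 1 / (real j + 1))"
        unfolding Aset_def freqabove_def by blast
      have "real n * c \<le> real n * (c + 1 / (real j + 1))"
        by (intro mult_left_mono) auto
      then have pos: "asum g ?s n - real n * c > 0" using n by linarith
      have "(\<Sum>k<n. h ((th ^^ k) ?s)) = (\<Sum>k<n. g ((th ^^ k) ?s) - c)"
        using sA Aset_pow[OF gB, where s="?s" and c=c] unfolding h_def by (intro sum.cong) auto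
      also have "\<dots> = asum g ?s n - real n * c"
        unfolding asum_def by (simp add: sum_subtractf)
      finally have "(\<Sum>k<n. h ((th ^^ k) ?s)) > 0" using pos by simp
      then have "Phi h n ?s > 0" using Phi_ge_sum[of n n h ?s] by simp
      then show "\<omega> \<in> (\<Union>n. E n)" using \<omega> unfolding E_def A_def by auto
    qed
    have UE: "(\<Union>n. E n) = A" using E_sub A_sub by blast
    have inc: "incseq E"
      unfolding incseq_Suc_iff E_def
      using Phi_mono[of h] by (auto intro: less_le_trans)
    have lim: "(\<lambda>n. prob (E n)) \<longlonglongrightarrow> 1"
      proof -
      have "range E \<subseteq> events" using E_ev by blast
      then show ?thesis using finite_Lim_measure_incseq[of E] inc UE pA by auto
    qed
    have bound: "0 \<le> E0 - c + (B + \<bar>c\<bar>) * (1 - prob (E n))" for n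
    proof -
      have ig: "integrable M (\<lambda>\<omega>. g (shz Z 0 \<omega>))"
        by (rule bounded_integrable[OF _ gB]) measurable
      have ii: "integrable M (\<lambda>\<omega>. (B + \<bar>c\<bar>) * indicator (space M - E n) \<omega>)"
        by (rule bounded_integrable[where B="B + \<bar>c\<bar>"]) (use B0 in \<open>auto simp: indicator_def\<close>)
      have "0 \<le> (\<integral>\<omega>. (if Phi h n (shz Z 0 \<omega>) > 0 then h (shz Z 0 \<omega>) else 0) \<partial>M)"
        by (rule maximal_lemma[OF h hB])
      also have "\<dots> \<le> (\<integral>\<omega>. (g (shz Z 0 \<omega>) - c) + (B + \<bar>c\<bar>) * indicator (space M - E n) \<omega> \<partial>M)"
      proof (rule integral_mono)
        show "integrable M (\<lambda>\<omega>. if Phi h n (shz Z 0 \<omega>) > 0 then h (shz Z 0 \<omega>) else 0)"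
          by (rule bounded_integrable[where B="B + \<bar>c\<bar>"]) (use hB B0 in auto)
        show "integrable M (\<lambda>\<omega>. (g (shz Z 0 \<omega>) - c) + (B + \<bar>c\<bar>) * indicator (space M - E n) \<omega>)"
          using ig ii by auto
        fix \<omega> assume \<omega>: "\<omega> \<in> space M"
        show "(if Phi h n (shz Z 0 \<omega>) > 0 then h (shz Z 0 \<omega>) else 0)
            \<le> (g (shz Z 0 \<omega>) - c) + (B + \<bar>c\<bar>) * indicator (space M - E n) \<omega>"
        proof (cases "\<omega> \<in> E n")
          case True
          then have "shz Z 0 \<omega> \<in> Aset g c" using E_sub unfolding A_def by auto
          then show ?thesis using True unfolding E_def h_def by simp
        next
          case False
          then have "\<not> Phi h n (shz Z 0 \<omega>) > 0" using \<omega> unfolding E_def by auto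
          moreover have "- B \<le> g (shz Z 0 \<omega>)" using gB[of "shz Z 0 \<omega>"] by simp
          moreover have "- \<bar>c\<bar> \<le> - c" by simp
          ultimately show ?thesis using False \<omega> by (simp add: indicator_def)
        qed
      qed
      also have "\<dots> = (E0 - c) + (B + \<bar>c\<bar>) * prob (space M - E n)"
        using ig ii unfolding E0_def
        by (simp add: Bochner_Integration.integral_add Bochner_Integration.integral_diff prob_space)
      also have "prob (space M - E n) = 1 - prob (E n)"
        using finite_measure_compl[OF E_ev[of n]] prob_space by simp
      finally show ?thesis by simp
    qed
    have "(\<lambda>n. E0 - c + (B + \<bar>c\<bar>) * (1 - prob (E n))) \<longlonglongrightarrow> E0 - c + (B + \<bar>c\<bar>) * (1 - 1)"
      by (intro tendsto_intros lim)
    then have "0 \<le> E0 - c + (B + \<bar>c\<bar>) * (1 - 1)"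
      by (rule LIMSEQ_le_const) (use bound in auto)
    then show False using c unfolding E0_def by simp
  qed
  then have "emeasure M A = 0" using A_ev by (simp add: emeasure_eq_measure)
  then have "A \<in> null_sets M" using A_ev by (intro null_setsI) auto
  then have "AE \<omega> in M. \<omega> \<notin> A" by (rule AE_not_in)
  moreover have "AE \<omega> in M. \<omega> \<in> space M" by (rule AE_space)
  ultimately show ?thesis by eventually_elim (auto simp: A_def)
qed

lemma BUL:
  assumes g[measurable]: "g \<in> borel_measurable SP" and gB: "\<And>s. \<bar>g s\<bar> \<le> B"
  shows "AE \<omega> in M. \<forall>\<epsilon>>0. eventually (\<lambda>n. (\<Sum>k<n. g (shz Z k \<omega>))
           \<le> real n * (expectation (\<lambda>\<omega>. g (shz Z 0 \<omega>)) + \<epsilon>)) sequentially"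
proof -
  define E0 where "E0 = expectation (\<lambda>\<omega>. g (shz Z 0 \<omega>))"
  have "AE \<omega> in M. \<forall>i::nat. shz Z 0 \<omega> \<notin> Aset g (E0 + 1 / (real i + 1))"
    unfolding AE_all_countable
    by (intro allI BUL_c[OF g gB]) (simp add: E0_def)
  then show ?thesis unfolding E0_def[symmetric]
  proof (eventually_elim)
    case (elim \<omega>)
    show ?case
    proof (intro allI impI)
      fix \<epsilon> :: real assume e: "\<epsilon> > 0"
      obtain i where i: "inverse (real (Suc i)) < \<epsilon> / 2" using reals_Archimedean[of "\<epsilon>/2"] e by auto
      let ?s = "shz Z 0 \<omega>"
      have "\<not> freqabove (asum g ?s) (E0 + 1 / (real i + 1))"
        using elim[rule_format, of i] unfolding Aset_def by simp
      then have "\<not> (\<forall>N. \<exists>n\<ge>N. asum g ?s n > real n * (E0 + 1 / (real i + 1) + 1 / (real i + 1)))"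
        unfolding freqabove_def by blast
      then obtain N where N: "\<And>n. n \<ge> N \<Longrightarrow> \<not> asum g ?s n > real n * (E0 + 1 / (real i + 1) + 1 / (real i + 1))"
        by blast
      have d: "1 / (real i + 1) < \<epsilon> / 2" using i by (simp add: inverse_eq_divide add.commute)
      have le: "asum g ?s n \<le> real n * (E0 + \<epsilon>)" if "n \<ge> N" for n
      proof -
        have "real n * (E0 + 1 / (real i + 1) + 1 / (real i + 1)) \<le> real n * (E0 + \<epsilon>)"
          using d by (intro mult_left_mono) auto
        then show ?thesis using N[OF that] by linarith
      qed
      have eq: "asum g ?s n = (\<Sum>k<n. g (shz Z k \<omega>))" for n
        unfolding asum_def by (intro sum.cong refl) (metis shz_pow)
      show "eventually (\<lambda>n. (\<Sum>k<n. g (shz Z k \<omega>)) \<le> real n * (E0 + \<epsilon>)) sequentially"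
        unfolding eventually_sequentially
      proof (intro exI[of _ N] allI impI)
        fix n assume "N \<le> n"
        then show "(\<Sum>k<n. g (shz Z k \<omega>)) \<le> real n * (E0 + \<epsilon>)" using le[of n] eq[of n] by simp
      qed
    qed
  qed
qed

end

lemma range_upper:
  fixes P :: "nat \<Rightarrow> int"
  shows "card (P ` {1..n}) \<le> Mm + card {t\<in>{1..n}. \<forall>j\<in>{1..Mm}. P (t + j) \<noteq> P t}"
proof -
  let ?R = "P ` {1..n}"
  let ?G = "{t\<in>{1..n}. \<forall>j\<in>{1..Mm}. P (t + j) \<noteq> P t}"
  define L where "L v = Max {t\<in>{1..n}. P t = v}" for v
  have Lp: "L v \<in> {1..n} \<and> P (L v) = v \<and> (\<forall>t\<in>{1..n}. P t = v \<longrightarrow> t \<le> L v)" if "v \<in> ?R" for v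
  proof -
    have ne: "{t\<in>{1..n}. P t = v} \<noteq> {}" using that by auto
    have fin: "finite {t\<in>{1..n}. P t = v}" by simp
    show ?thesis using Max_in[OF fin ne] Max_ge[OF fin] unfolding L_def by auto
  qed
  have inj: "inj_on L ?R"
    by (rule inj_onI) (metis Lp)
  have sub: "L ` ?R \<subseteq> ?G \<union> {n - Mm <.. n}"
  proof
    fix t assume "t \<in> L ` ?R"
    then obtain v where v: "v \<in> ?R" "t = L v" by auto
    note Lv = Lp[OF v(1)]
    show "t \<in> ?G \<union> {n - Mm <.. n}"
    proof (cases "t + Mm \<le> n")
      case True
      have "P (t + j) \<noteq> P t" if j: "j \<in> {1..Mm}" for j
      proof
        assume "P (t + j) = P t"
        then have "t + j \<le> L v" using Lv v(2) j True by auto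
        then show False using v(2) j by simp
      qed
      then show ?thesis using Lv v(2) by auto
    next
      case False
      then show ?thesis using Lv v(2) by auto
    qed
  qed
  have "card ?R = card (L ` ?R)" using card_image[OF inj] by simp
  also have "\<dots> \<le> card (?G \<union> {n - Mm <.. n})" by (rule card_mono[OF _ sub]) simp
  also have "\<dots> \<le> card ?G + card {n - Mm <.. n}" by (rule card_Un_le)
  also have "card {n - Mm <.. n} \<le> Mm" by simp
  finally show ?thesis by simp
qed

lemma range_lower:
  fixes P :: "nat \<Rightarrow> int"
  shows "card {t\<in>{1..n}. \<forall>j\<ge>1. P (t + j) \<noteq> P t} \<le> card (P ` {1..n})"
proof -
  let ?G = "{t\<in>{1..n}. \<forall>j\<ge>1. P (t + j) \<noteq> P t}"
  have inj: "inj_on P ?G"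
  proof (rule inj_onI)
    fix a b assume a: "a \<in> ?G" and b: "b \<in> ?G" and e: "P a = P b"
    show "a = b"
    proof (rule ccontr)
      assume "a \<noteq> b"
      then consider "a < b" | "b < a" by linarith
      then show False
      proof cases
        case 1
        then have "b - a \<ge> 1" by simp
        then have "P (a + (b - a)) \<noteq> P a" using a by blast
        then show False using 1 e by simp
      next
        case 2
        then have "a - b \<ge> 1" by simp
        then have "P (b + (a - b)) \<noteq> P b" using b by blast
        then show False using 2 e by simp
      qed
    qed
  qed
  have "card ?G = card (P ` ?G)" using card_image[OF inj] by simp
  also have "\<dots> \<le> card (P ` {1..n})" by (intro card_mono) auto
  finally show ?thesis .
qed

lemma sum_lessThan_add_split:
  "(\<Sum>i<t + j. g i) = (\<Sum>i<t. g i) + (\<Sum>i<j. g (t + i :: nat)) "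
  by (induction j) (auto simp: add.assoc)

lemma card_eq_sum_if:
  assumes "finite A"
  shows "real (card {t\<in>A. Q t}) = (\<Sum>t\<in>A. if Q t then 1 else 0)"
proof -
  have "(\<Sum>t\<in>A. (if Q t then 1 else 0 :: real)) = (\<Sum>t\<in>{t\<in>A. Q t}. 1)"
    using assms by (simp add: sum.If_cases Int_def)
  then show ?thesis by simp
qed

lemma tendsto_from_bounds:
  fixes x :: "nat \<Rightarrow> real"
  assumes up: "\<And>\<epsilon>. \<epsilon> > 0 \<Longrightarrow> eventually (\<lambda>n. x n \<le> q + \<epsilon>) sequentially"
    and lo: "\<And>\<epsilon>. \<epsilon> > 0 \<Longrightarrow> eventually (\<lambda>n. x n \<ge> q - \<epsilon>) sequentially"
  shows "x \<longlonglongrightarrow> q"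
proof (rule tendstoI)
  fix \<epsilon> :: real assume e: "\<epsilon> > 0"
  have "eventually (\<lambda>n. x n \<le> q + \<epsilon> / 2) sequentially" using up e by simp
  moreover have "eventually (\<lambda>n. x n \<ge> q - \<epsilon> / 2) sequentially" using lo e by simp
  ultimately show "eventually (\<lambda>n. dist (x n) q < \<epsilon>) sequentially"
    by eventually_elim (use e in \<open>auto simp: dist_real_def abs_if\<close>)
qed

definition psum :: "(nat \<Rightarrow> 'a \<Rightarrow> int) \<Rightarrow> nat \<Rightarrow> 'a \<Rightarrow> int" where
  "psum Z j \<omega> = (\<Sum>i<j. Z i \<omega>)"

definition wM :: "nat \<Rightarrow> (nat \<Rightarrow> int) \<Rightarrow> real" where
  "wM m s = (if \<forall>j\<in>{1..m}. (\<Sum>i<j. real_of_int (s i)) \<noteq> 0 then 1 else 0)"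

definition fN :: "(nat \<Rightarrow> int) \<Rightarrow> real" where
  "fN s = (if \<forall>j::nat. j \<ge> 1 \<longrightarrow> (\<Sum>i<j. real_of_int (s i)) \<noteq> 0 then 1 else 0)"

lemma comp_real_meas[measurable]: "(\<lambda>s. real_of_int (s i)) \<in> borel_measurable SP"
  by (rule measurable_compose[OF comp_measurable_SP borel_measurable_count_space])

lemma wM_meas[measurable]: "wM m \<in> borel_measurable SP"
  unfolding wM_def by measurable

lemma fN_meas[measurable]: "fN \<in> borel_measurable SP"
  unfolding fN_def by measurable

lemma shz_psum: "(\<Sum>i<j. real_of_int (shz Z t \<omega> i)) = real_of_int (psum Z (t + j) \<omega> - psum Z t \<omega>)"
  unfolding psum_def shz_def by (simp add: sum_lessThan_add_split)

lemma eventually_large_real: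
  fixes e :: real assumes "e > 0"
  shows "eventually (\<lambda>n. real n * e \<ge> K) sequentially"
proof -
  obtain N :: nat where N: "real N \<ge> K / e" using real_arch_simple by blast
  show ?thesis unfolding eventually_sequentially
  proof (intro exI[of _ N] allI impI)
    fix n assume "N \<le> n"
    then have "real n \<ge> K / e" using N by linarith
    then show "real n * e \<ge> K" using assms by (simp add: pos_divide_le_eq)
  qed
qed

context iidseq
begin

definition qinf :: real where
  "qinf = prob {\<omega>\<in>space M. \<forall>j\<ge>1. psum Z j \<omega> \<noteq> 0}"

definition qM :: "nat \<Rightarrow> real" where
  "qM m = prob {\<omega>\<in>space M. \<forall>j\<in>{1..m}. psum Z j \<omega> \<noteq> 0}"

lemma psum0: "psum Z 0 \<omega> = 0" by (simp add: psum_def)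

lemma wM_shz: "wM m (shz Z t \<omega>) = (if \<forall>j\<in>{1..m}. psum Z (t + j) \<omega> \<noteq> psum Z t \<omega> then 1 else 0)"
  unfolding wM_def shz_psum by simp

lemma fN_shz: "fN (shz Z t \<omega>) = (if \<forall>j\<ge>1. psum Z (t + j) \<omega> \<noteq> psum Z t \<omega> then 1 else 0)"
  unfolding fN_def shz_psum by simp

lemma exp_wM: "expectation (\<lambda>\<omega>. wM m (shz Z 0 \<omega>)) = qM m"
proof -
  have eq: "(\<lambda>\<omega>. wM m (shz Z 0 \<omega>)) = indicator {\<omega>. \<forall>j\<in>{1..m}. psum Z j \<omega> \<noteq> 0}"
    by (rule ext) (simp add: wM_shz psum0 indicator_def)
  have "{\<omega>. \<forall>j\<in>{1..m}. psum Z j \<omega> \<noteq> 0} \<inter> space M = {\<omega>\<in>space M. \<forall>j\<in>{1..m}. psum Z j \<omega> \<noteq> 0}"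
    by blast
  then show ?thesis unfolding eq qM_def integral_indicator by simp
qed

lemma exp_fN: "expectation (\<lambda>\<omega>. fN (shz Z 0 \<omega>)) = qinf"
proof -
  have eq: "(\<lambda>\<omega>. fN (shz Z 0 \<omega>)) = indicator {\<omega>. \<forall>j\<ge>1. psum Z j \<omega> \<noteq> 0}"
    by (rule ext) (simp add: fN_shz psum0 indicator_def)
  have "{\<omega>. \<forall>j\<ge>1. psum Z j \<omega> \<noteq> 0} \<inter> space M = {\<omega>\<in>space M. \<forall>j\<ge>1. psum Z j \<omega> \<noteq> 0}"
    by blast
  then show ?thesis unfolding eq qinf_def integral_indicator by simp
qed

lemma qM_lim: "qM \<longlonglongrightarrow> qinf"
proof -
  define G where "G m = {\<omega>\<in>space M. \<forall>j\<in>{1..m}. psum Z j \<omega> \<noteq> 0}" for m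
  have G_eq: "G m = shz Z 0 -` {s. \<forall>j\<in>{1..m}. (\<Sum>i<j. real_of_int (s i)) \<noteq> 0} \<inter> space M" for m
    unfolding G_def using shz_psum[of Z 0 _] by (auto simp: psum0)
  have Gs: "G m \<in> events" for m
  proof -
    have "{s. \<forall>j\<in>{1..m}. (\<Sum>i<j. real_of_int (s i)) \<noteq> 0} \<in> sets SP"
    proof -
      have "{s \<in> space SP. \<forall>j\<in>{1..m}. (\<Sum>i<j. real_of_int (s i)) \<noteq> 0} \<in> sets SP" by measurable
      then show ?thesis by (simp add: space_SP)
    qed
    then show ?thesis unfolding G_eq by (rule measurable_sets[OF shz_measurable])
  qed
  have dec: "decseq G" unfolding decseq_def G_def by auto
  have "(\<Inter>m. G m) = {\<omega>\<in>space M. \<forall>j\<ge>1. psum Z j \<omega> \<noteq> 0}"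
    unfolding G_def by (auto; metis atLeastAtMost_iff order_refl)
  moreover have "range G \<subseteq> events" using Gs by blast
  ultimately show ?thesis
    using finite_Lim_measure_decseq[of G] dec unfolding qM_def qinf_def G_def by simp
qed

theorem range_lim:
  "AE \<omega> in M. (\<lambda>n. real (card ((\<lambda>j. psum Z j \<omega>) ` {1..n})) / real n) \<longlonglongrightarrow> qinf"
proof -
  have wB: "\<bar>wM m s\<bar> \<le> 1" for m s by (simp add: wM_def)
  have fB: "\<bar>1 - fN s\<bar> \<le> 1" for s by (simp add: fN_def)
  have AE1: "AE \<omega> in M. \<forall>m. \<forall>\<epsilon>>0. eventually (\<lambda>n. (\<Sum>k<n. wM m (shz Z k \<omega>)) \<le> real n * (qM m + \<epsilon>)) sequentially"
    unfolding AE_all_countable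
  proof
    fix m
    show "AE \<omega> in M. \<forall>\<epsilon>>0. eventually (\<lambda>n. (\<Sum>k<n. wM m (shz Z k \<omega>)) \<le> real n * (qM m + \<epsilon>)) sequentially"
      using BUL[OF wM_meas wB, of m] unfolding exp_wM .
  qed
  have e1f: "expectation (\<lambda>\<omega>. 1 - fN (shz Z 0 \<omega>)) = 1 - qinf"
  proof -
    have "integrable M (\<lambda>\<omega>. fN (shz Z 0 \<omega>))"
      by (rule bounded_integrable[where B=1]) (auto simp: fN_def)
    then show ?thesis using exp_fN by (simp add: Bochner_Integration.integral_diff prob_space)
  qed
  have AE2: "AE \<omega> in M. \<forall>\<epsilon>>0. eventually (\<lambda>n. (\<Sum>k<n. 1 - fN (shz Z k \<omega>)) \<le> real n * (1 - qinf + \<epsilon>)) sequentially"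
    using BUL[of "\<lambda>s. 1 - fN s" 1] fB unfolding e1f by simp
  show ?thesis
    using AE1 AE2
  proof eventually_elim
    case (elim \<omega>)
    let ?P = "\<lambda>j. psum Z j \<omega>"
    let ?R = "\<lambda>n. real (card (?P ` {1..n}))"
    have q0: "0 \<le> qinf" unfolding qinf_def by simp
    have q1: "qinf \<le> 1" unfolding qinf_def by simp
    show ?case
    proof (rule tendsto_from_bounds)
      fix \<epsilon> :: real assume e: "\<epsilon> > 0"
      have "eventually (\<lambda>m. dist (qM m) qinf < \<epsilon> / 3) sequentially"
        using qM_lim e by (intro tendstoD) auto
      then have "eventually (\<lambda>m. qM m < qinf + \<epsilon> / 3) sequentially"
      proof (rule eventually_mono)
        fix x assume "dist (qM x) qinf < \<epsilon> / 3"
        then have "\<bar>qM x - qinf\<bar> < \<epsilon> / 3" by (simp only: dist_real_def)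
        then show "qM x < qinf + \<epsilon> / 3" by linarith
      qed
      then obtain m where m: "qM m < qinf + \<epsilon> / 3" by (meson eventually_sequentially order_refl)
      have qm0: "0 \<le> qM m" unfolding qM_def by simp
      have ev1: "eventually (\<lambda>n. (\<Sum>k<Suc n. wM m (shz Z k \<omega>)) \<le> real (Suc n) * (qM m + \<epsilon> / 3)) sequentially"
      proof -
        have E: "eventually (\<lambda>n. (\<Sum>k<n. wM m (shz Z k \<omega>)) \<le> real n * (qM m + \<epsilon> / 3)) sequentially"
          using elim(1) e by simp
        show ?thesis by (rule eventually_sequentially_Suc[THEN iffD2, OF E])
      qed
      have ev2: "eventually (\<lambda>n. real n * \<epsilon> \<ge> 3 * real m + 3 + \<epsilon>) sequentially"
        by (rule eventually_large_real[OF e])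
      show "eventually (\<lambda>n. ?R n / real n \<le> qinf + \<epsilon>) sequentially"
        using ev1 ev2 eventually_gt_at_top[of 0]
      proof eventually_elim
        case (elim n)
        have "?R n \<le> real m + real (card {t\<in>{1..n}. \<forall>j\<in>{1..m}. ?P (t + j) \<noteq> ?P t})"
          using range_upper[of ?P n m] by linarith
        also have "real (card {t\<in>{1..n}. \<forall>j\<in>{1..m}. ?P (t + j) \<noteq> ?P t}) = (\<Sum>t\<in>{1..n}. wM m (shz Z t \<omega>))"
          by (subst card_eq_sum_if) (simp_all add: wM_shz)
        also have "\<dots> \<le> (\<Sum>k<Suc n. wM m (shz Z k \<omega>))"
          by (rule sum_mono2) (auto simp: wM_def)
        finally have R1: "?R n \<le> real m + real (Suc n) * (qM m + \<epsilon> / 3)" using elim(1) by linarith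
        have "real (Suc n) * (qM m + \<epsilon> / 3) = real n * qM m + real n * \<epsilon> / 3 + qM m + \<epsilon> / 3"
          by (simp add: algebra_simps)
        moreover have "real n * qM m \<le> real n * (qinf + \<epsilon> / 3)" using m by (intro mult_left_mono) auto
        moreover have "real n * (qinf + \<epsilon> / 3) = real n * qinf + real n * \<epsilon> / 3" by (simp add: algebra_simps)
        moreover have "qM m \<le> 1" unfolding qM_def by simp
        ultimately have "?R n \<le> real n * qinf + real n * \<epsilon>" using R1 elim(2) by linarith
        then have "?R n \<le> real n * (qinf + \<epsilon>)" by (simp add: algebra_simps)
        then show ?case using elim(3) by (simp add: pos_divide_le_eq mult.commute)
      qed
    next
      fix \<epsilon> :: real assume e: "\<epsilon> > 0"
      have ev1: "eventually (\<lambda>n. (\<Sum>k<Suc n. 1 - fN (shz Z k \<omega>)) \<le> real (Suc n) * (1 - qinf + \<epsilon> / 2)) sequentially"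
      proof -
        have E: "eventually (\<lambda>n. (\<Sum>k<n. 1 - fN (shz Z k \<omega>)) \<le> real n * (1 - qinf + \<epsilon> / 2)) sequentially"
          using elim(2) e by simp
        show ?thesis by (rule eventually_sequentially_Suc[THEN iffD2, OF E])
      qed
      have ev2: "eventually (\<lambda>n. real n * \<epsilon> \<ge> 2 + \<epsilon>) sequentially"
        by (rule eventually_large_real[OF e])
      show "eventually (\<lambda>n. ?R n / real n \<ge> qinf - \<epsilon>) sequentially"
        using ev1 ev2 eventually_gt_at_top[of 0]
      proof eventually_elim
        case (elim n)
        have "real (card {t\<in>{1..n}. \<forall>j\<ge>1. ?P (t + j) \<noteq> ?P t}) \<le> ?R n"
          using range_lower[of n ?P] by simp
        moreover have "real (card {t\<in>{1..n}. \<forall>j\<ge>1. ?P (t + j) \<noteq> ?P t}) = (\<Sum>t\<in>{1..n}. fN (shz Z t \<omega>))"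
          by (subst card_eq_sum_if) (simp_all add: fN_shz)
        moreover have "(\<Sum>t\<in>{1..n}. 1 - fN (shz Z t \<omega>)) = real n - (\<Sum>t\<in>{1..n}. fN (shz Z t \<omega>))"
          by (simp add: sum_subtractf)
        moreover have "(\<Sum>t\<in>{1..n}. 1 - fN (shz Z t \<omega>)) \<le> (\<Sum>k<Suc n. 1 - fN (shz Z k \<omega>))"
          by (rule sum_mono2) (auto simp: fN_def)
        moreover have "real (Suc n) * (1 - qinf + \<epsilon> / 2) = real n - real n * qinf + real n * \<epsilon> / 2 + 1 - qinf + \<epsilon> / 2"
          by (simp add: algebra_simps)
        ultimately have "?R n \<ge> real n * qinf - real n * \<epsilon>" using elim(1,2) q0 by linarith
        then have "?R n \<ge> real n * (qinf - \<epsilon>)" by (simp add: algebra_simps)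
        then show ?case using elim(3) by (simp add: pos_le_divide_eq mult.commute)
      qed
    qed
  qed
qed

end


locale scen = prob_space N for N :: "'b measure" +
  fixes \<xi> :: "int \<Rightarrow> 'b \<Rightarrow> real"
  assumes \<xi>_meas[measurable]: "\<And>i. \<xi> i \<in> borel_measurable N"
  and stat: "stationary_field N \<xi>"
begin

lemma stat_gt:
  assumes I: "finite I"
  shows "prob {x\<in>space N. \<forall>i\<in>I. \<xi> (i + h) x > v} = prob {x\<in>space N. \<forall>i\<in>I. \<xi> i x > v}"
proof -
  let ?P = "PiM I (\<lambda>_. borel :: real measure)"
  let ?S = "PiE I (\<lambda>_. {v<..})"
  have S: "?S \<in> sets ?P" using I by (intro sets_PiM_I_finite) auto
  have m1: "(\<lambda>x. \<lambda>i\<in>I. \<xi> (i + h) x) \<in> measurable N ?P" by measurable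
  have m2: "(\<lambda>x. \<lambda>i\<in>I. \<xi> i x) \<in> measurable N ?P" by measurable
  have eq: "distr N ?P (\<lambda>x. \<lambda>i\<in>I. \<xi> (i + h) x) = distr N ?P (\<lambda>x. \<lambda>i\<in>I. \<xi> i x)"
    using stat I unfolding stationary_field_def by blast
  have "prob {x\<in>space N. \<forall>i\<in>I. \<xi> (i + h) x > v} = measure (distr N ?P (\<lambda>x. \<lambda>i\<in>I. \<xi> (i + h) x)) ?S"
  proof -
    have "(\<lambda>x. \<lambda>i\<in>I. \<xi> (i + h) x) -` ?S \<inter> space N = {x\<in>space N. \<forall>i\<in>I. \<xi> (i + h) x > v}"
      by (auto simp: PiE_iff)
    then show ?thesis using S m1 by (simp add: measure_distr)
  qed
  also have "\<dots> = measure (distr N ?P (\<lambda>x. \<lambda>i\<in>I. \<xi> i x)) ?S" using eq by simp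
  also have "\<dots> = prob {x\<in>space N. \<forall>i\<in>I. \<xi> i x > v}"
  proof -
    have "(\<lambda>x. \<lambda>i\<in>I. \<xi> i x) -` ?S \<inter> space N = {x\<in>space N. \<forall>i\<in>I. \<xi> i x > v}"
      by (auto simp: PiE_iff)
    then show ?thesis using S m2 by (simp add: measure_distr)
  qed
  finally show ?thesis .
qed

lemma stat1: "prob {x\<in>space N. \<xi> i x > v} = prob {x\<in>space N. \<xi> 0 x > v}"
  using stat_gt[where I="{0}" and h=i and v=v] by simp

lemma stat2: "prob {x\<in>space N. \<xi> i x > v \<and> \<xi> (i + d) x > v} = prob {x\<in>space N. \<xi> 0 x > v \<and> \<xi> d x > v}"
proof -
  have "prob {x\<in>space N. \<forall>j\<in>{0, d}. \<xi> (j + i) x > v} = prob {x\<in>space N. \<forall>j\<in>{0, d}. \<xi> j x > v}"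
    by (rule stat_gt) simp
  then show ?thesis by (simp add: add.commute)
qed

lemma bonferroni:
  assumes "finite B" and A: "\<And>i. A i \<in> events"
  shows "prob (\<Union>i\<in>B. A i) \<ge> (\<Sum>i\<in>B. prob (A i)) - (\<Sum>i\<in>B. \<Sum>j\<in>B - {i}. prob (A i \<inter> A j))"
  using assms(1)
proof (induction B rule: finite_induct)
  case empty then show ?case by simp
next
  case (insert x B)
  let ?U = "\<Union>i\<in>B. A i"
  have U: "?U \<in> events" using A insert.hyps by auto
  have "prob (A x \<union> ?U) = prob (A x) + prob (?U - A x)"
    using finite_measure_Union'[OF A[of x] U] by simp
  also have "prob (?U - A x) = prob ?U - prob (?U \<inter> A x)"
    using finite_measure_Diff'[OF U A[of x]] by simp
  finally have e1: "prob (A x \<union> ?U) = prob (A x) + prob ?U - prob (?U \<inter> A x)" by simp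
  have "prob (?U \<inter> A x) = prob (\<Union>j\<in>B. A x \<inter> A j)" by (intro arg_cong[where f=prob]) auto
  also have "\<dots> \<le> (\<Sum>j\<in>B. prob (A x \<inter> A j))"
    using A insert.hyps by (intro finite_measure_subadditive_finite) auto
  finally have e2: "prob (?U \<inter> A x) \<le> (\<Sum>j\<in>B. prob (A x \<inter> A j))" .
  have e3: "(\<Sum>i\<in>insert x B. \<Sum>j\<in>insert x B - {i}. prob (A i \<inter> A j))
      = (\<Sum>j\<in>B. prob (A x \<inter> A j)) + (\<Sum>i\<in>B. prob (A i \<inter> A x)) + (\<Sum>i\<in>B. \<Sum>j\<in>B - {i}. prob (A i \<inter> A j))"
  proof -
    have "insert x B - {x} = B" using insert.hyps by auto
    moreover have "(\<Sum>i\<in>B. \<Sum>j\<in>insert x B - {i}. prob (A i \<inter> A j))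
        = (\<Sum>i\<in>B. prob (A i \<inter> A x) + (\<Sum>j\<in>B - {i}. prob (A i \<inter> A j)))"
    proof (intro sum.cong refl)
      fix i assume i: "i \<in> B"
      have "insert x B - {i} = insert x (B - {i})" using i insert.hyps by auto
      then show "(\<Sum>j\<in>insert x B - {i}. prob (A i \<inter> A j)) = prob (A i \<inter> A x) + (\<Sum>j\<in>B - {i}. prob (A i \<inter> A j))"
        using insert.hyps by simp
    qed
    ultimately show ?thesis using insert.hyps by (simp add: sum.distrib)
  qed
  have e4: "0 \<le> (\<Sum>i\<in>B. prob (A i \<inter> A x))" by (intro sum_nonneg) simp
  have "(\<Union>i\<in>insert x B. A i) = A x \<union> ?U" by simp
  then show ?case using insert.IH e1 e2 e3 e4 insert.hyps by simp
qed

definition Ag :: "real \<Rightarrow> int \<Rightarrow> 'b set" where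
  "Ag v i = {x\<in>space N. v < \<xi> i x}"

lemma Ag_ev[measurable]: "Ag v i \<in> events"
  unfolding Ag_def by measurable

lemma F1: "Fjoint N \<xi> {i} v = 1 - prob (Ag v i)"
proof -
  have "{x \<in> space N. \<forall>k\<in>{i}. \<xi> k x \<le> v} = space N - Ag v i" by (auto simp: Ag_def)
  then show ?thesis unfolding Fjoint_def using prob_compl[OF Ag_ev] by simp
qed

lemma F2: "Fjoint N \<xi> {i, j} v = 1 - (prob (Ag v i) + prob (Ag v j) - prob (Ag v i \<inter> Ag v j))"
proof -
  have "{x \<in> space N. \<forall>k\<in>{i, j}. \<xi> k x \<le> v} = space N - (Ag v i \<union> Ag v j)" by (auto simp: Ag_def)
  moreover have "prob (Ag v i \<union> Ag v j) = prob (Ag v i) + prob (Ag v j) - prob (Ag v i \<inter> Ag v j)"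
    using finite_measure_Union'[OF Ag_ev Ag_ev, of v i v j] finite_measure_Diff'[OF Ag_ev Ag_ev, of v j v i]
    by (simp add: Int_commute)
  moreover have "Ag v i \<union> Ag v j \<in> events" by simp
  ultimately show ?thesis unfolding Fjoint_def using prob_compl by simp
qed

lemma Ag_stat1: "prob (Ag v i) = prob (Ag v 0)"
  unfolding Ag_def using stat1 by simp

lemma pair_le:
  assumes "\<bar>Fjoint N \<xi> {i, j} v - Fjoint N \<xi> {i} v * Fjoint N \<xi> {j} v\<bar> \<le> a"
  shows "prob (Ag v i \<inter> Ag v j) \<le> (prob (Ag v 0))\<^sup>2 + a"
proof -
  let ?p = "prob (Ag v 0)"
  have "Fjoint N \<xi> {i, j} v \<le> (1 - ?p) * (1 - ?p) + a"
    using assms unfolding F1 Ag_stat1[of v i] Ag_stat1[of v j] by linarith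
  then have "1 - (?p + ?p - prob (Ag v i \<inter> Ag v j)) \<le> (1 - ?p) * (1 - ?p) + a"
    unfolding F2 Ag_stat1[of v i] Ag_stat1[of v j] .
  then show ?thesis by (simp add: power2_eq_square algebra_simps)
qed

lemma int_image_up: "(\<lambda>d::nat. i + int d) ` {1..L} = {i + 1..i + int L}"
proof
  show "{i + 1..i + int L} \<subseteq> (\<lambda>d. i + int d) ` {1..L}"
  proof
    fix j assume j: "j \<in> {i + 1..i + int L}"
    then have "j = i + int (nat (j - i))" "nat (j - i) \<in> {1..L}" by auto
    then show "j \<in> (\<lambda>d. i + int d) ` {1..L}" by blast
  qed
qed auto

lemma int_image_down: "(\<lambda>d::nat. i - int d) ` {1..L} = {i - int L..i - 1}"
proof
  show "{i - int L..i - 1} \<subseteq> (\<lambda>d. i - int d) ` {1..L}"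
  proof
    fix j assume j: "j \<in> {i - int L..i - 1}"
    then have "j = i - int (nat (i - j))" "nat (i - j) \<in> {1..L}" by auto
    then show "j \<in> (\<lambda>d. i - int d) ` {1..L}" by blast
  qed
qed auto

lemma near_sums:
  "(\<Sum>j\<in>{i + 1..i + int L}. prob (Ag v i \<inter> Ag v j)) = (\<Sum>d\<in>{1..L}. prob {x\<in>space N. \<xi> 0 x > v \<and> \<xi> (int d) x > v})"
  "(\<Sum>j\<in>{i - int L..i - 1}. prob (Ag v i \<inter> Ag v j)) = (\<Sum>d\<in>{1..L}. prob {x\<in>space N. \<xi> 0 x > v \<and> \<xi> (int d) x > v})"
proof -
  have inj1: "inj_on (\<lambda>d::nat. i + int d) {1..L}" by (auto simp: inj_on_def)
  have inj2: "inj_on (\<lambda>d::nat. i - int d) {1..L}" by (auto simp: inj_on_def)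
  have "(\<Sum>j\<in>{i + 1..i + int L}. prob (Ag v i \<inter> Ag v j)) = (\<Sum>d\<in>{1..L}. prob (Ag v i \<inter> Ag v (i + int d)))"
    using sum.reindex[OF inj1, of "\<lambda>j. prob (Ag v i \<inter> Ag v j)"] unfolding int_image_up by (simp add: o_def)
  also have "\<dots> = (\<Sum>d\<in>{1..L}. prob {x\<in>space N. \<xi> 0 x > v \<and> \<xi> (int d) x > v})"
  proof (intro sum.cong refl)
    fix d assume "d \<in> {1..L}"
    have "Ag v i \<inter> Ag v (i + int d) = {x\<in>space N. \<xi> i x > v \<and> \<xi> (i + int d) x > v}" by (auto simp: Ag_def)
    then show "prob (Ag v i \<inter> Ag v (i + int d)) = prob {x\<in>space N. \<xi> 0 x > v \<and> \<xi> (int d) x > v}"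
      using stat2 by simp
  qed
  finally show "(\<Sum>j\<in>{i + 1..i + int L}. prob (Ag v i \<inter> Ag v j)) = (\<Sum>d\<in>{1..L}. prob {x\<in>space N. \<xi> 0 x > v \<and> \<xi> (int d) x > v})" .
  have "(\<Sum>j\<in>{i - int L..i - 1}. prob (Ag v i \<inter> Ag v j)) = (\<Sum>d\<in>{1..L}. prob (Ag v i \<inter> Ag v (i - int d)))"
    using sum.reindex[OF inj2, of "\<lambda>j. prob (Ag v i \<inter> Ag v j)"] unfolding int_image_down by (simp add: o_def)
  also have "\<dots> = (\<Sum>d\<in>{1..L}. prob {x\<in>space N. \<xi> 0 x > v \<and> \<xi> (int d) x > v})"
  proof (intro sum.cong refl)
    fix d assume "d \<in> {1..L}"
    have "Ag v i \<inter> Ag v (i - int d) = {x\<in>space N. \<xi> (i - int d) x > v \<and> \<xi> ((i - int d) + int d) x > v}" by (auto simp: Ag_def)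
    then show "prob (Ag v i \<inter> Ag v (i - int d)) = prob {x\<in>space N. \<xi> 0 x > v \<and> \<xi> (int d) x > v}"
      using stat2[of v "i - int d" "int d"] by simp
  qed
  finally show "(\<Sum>j\<in>{i - int L..i - 1}. prob (Ag v i \<inter> Ag v j)) = (\<Sum>d\<in>{1..L}. prob {x\<in>space N. \<xi> 0 x > v \<and> \<xi> (int d) x > v})" .
qed

lemma block_bounds:
  fixes B :: "int set" and v a :: real and L l :: nat
  assumes B: "finite B" and lL: "l \<le> L"
    and Dc: "\<And>i j. i < j \<Longrightarrow> j - i \<ge> int l \<Longrightarrow>
         \<bar>Fjoint N \<xi> {i, j} v - Fjoint N \<xi> {i} v * Fjoint N \<xi> {j} v\<bar> \<le> a"
  shows "1 - real (card B) * prob (Ag v 0) \<le> prob {x\<in>space N. \<forall>i\<in>B. \<xi> i x \<le> v}"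
    "prob {x\<in>space N. \<forall>i\<in>B. \<xi> i x \<le> v} \<le> 1 - real (card B) * prob (Ag v 0)
        + real (card B) * (2 * (\<Sum>d\<in>{1..L}. prob {x\<in>space N. \<xi> 0 x > v \<and> \<xi> (int d) x > v}))
        + (real (card B))\<^sup>2 * ((prob (Ag v 0))\<^sup>2 + a)"
proof -
  define p where "p = prob (Ag v 0)"
  define Ds where "Ds = (\<Sum>d\<in>{1..L}. prob {x\<in>space N. \<xi> 0 x > v \<and> \<xi> (int d) x > v})"
  define U where "U = (\<Union>i\<in>B. Ag v i)"
  have U: "U \<in> events" unfolding U_def using B by auto
  have eqU: "{x\<in>space N. \<forall>i\<in>B. \<xi> i x \<le> v} = space N - U" unfolding U_def Ag_def by auto
  have pM: "prob {x\<in>space N. \<forall>i\<in>B. \<xi> i x \<le> v} = 1 - prob U"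
    unfolding eqU using prob_compl[OF U] by simp
  have sumA: "(\<Sum>i\<in>B. prob (Ag v i)) = real (card B) * p"
  proof -
    have "(\<Sum>i\<in>B. prob (Ag v i)) = (\<Sum>i\<in>B. p)"
      unfolding p_def by (intro sum.cong refl) (rule Ag_stat1)
    then show ?thesis by simp
  qed
  have Ule: "prob U \<le> real (card B) * p"
    unfolding U_def sumA[symmetric] using B by (intro finite_measure_subadditive_finite) auto
  then show "1 - real (card B) * prob (Ag v 0) \<le> prob {x\<in>space N. \<forall>i\<in>B. \<xi> i x \<le> v}"
    using pM unfolding p_def by simp
  have a0: "0 \<le> a" using Dc[of 0 "int l + 1"] by simp
  have pa0: "0 \<le> p\<^sup>2 + a" using a0 by simp
  have near: "(\<Sum>j\<in>B - {i}. prob (Ag v i \<inter> Ag v j)) \<le> 2 * Ds + real (card B) * (p\<^sup>2 + a)" for i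
  proof -
    define Nr where "Nr = {i + 1..i + int L} \<union> {i - int L..i - 1}"
    have finNr: "finite Nr" unfolding Nr_def by simp
    have pw: "prob (Ag v i \<inter> Ag v j) \<le> (if j \<in> Nr then prob (Ag v i \<inter> Ag v j) else 0) + (p\<^sup>2 + a)"
      if j: "j \<in> B - {i}" for j
    proof (cases "j \<in> Nr")
      case True then show ?thesis using pa0 by simp
    next
      case False
      then have far: "\<bar>j - i\<bar> > int L" "j \<noteq> i" using j unfolding Nr_def by auto
      show ?thesis
      proof (cases "i < j")
        case True
        then have "prob (Ag v i \<inter> Ag v j) \<le> p\<^sup>2 + a"
          unfolding p_def using far lL by (intro pair_le Dc) auto
        then show ?thesis using False by simp
      next
        case ij: False
        then have "prob (Ag v j \<inter> Ag v i) \<le> p\<^sup>2 + a"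
          unfolding p_def using far lL by (intro pair_le Dc) auto
        then show ?thesis using False by (simp add: Int_commute)
      qed
    qed
    have "(\<Sum>j\<in>B - {i}. prob (Ag v i \<inter> Ag v j))
        \<le> (\<Sum>j\<in>B - {i}. (if j \<in> Nr then prob (Ag v i \<inter> Ag v j) else 0) + (p\<^sup>2 + a))"
      by (rule sum_mono) (rule pw)
    also have "\<dots> = (\<Sum>j\<in>B - {i}. (if j \<in> Nr then prob (Ag v i \<inter> Ag v j) else 0)) + real (card (B - {i})) * (p\<^sup>2 + a)"
      by (simp add: sum.distrib)
    also have "(\<Sum>j\<in>B - {i}. (if j \<in> Nr then prob (Ag v i \<inter> Ag v j) else 0)) = (\<Sum>j\<in>(B - {i}) \<inter> Nr. prob (Ag v i \<inter> Ag v j))"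
      using B by (simp add: sum.inter_restrict)
    also have "\<dots> \<le> (\<Sum>j\<in>Nr. prob (Ag v i \<inter> Ag v j))"
      using finNr by (intro sum_mono2) auto
    also have "\<dots> = (\<Sum>j\<in>{i + 1..i + int L}. prob (Ag v i \<inter> Ag v j)) + (\<Sum>j\<in>{i - int L..i - 1}. prob (Ag v i \<inter> Ag v j))"
      unfolding Nr_def by (rule sum.union_disjoint) auto
    also have "\<dots> = 2 * Ds" unfolding near_sums Ds_def by simp
    also have "real (card (B - {i})) * (p\<^sup>2 + a) \<le> real (card B) * (p\<^sup>2 + a)"
      using B pa0 by (intro mult_right_mono) (auto intro: card_mono)
    finally show ?thesis by simp
  qed
  have dbl: "(\<Sum>i\<in>B. \<Sum>j\<in>B - {i}. prob (Ag v i \<inter> Ag v j)) \<le> real (card B) * (2 * Ds + real (card B) * (p\<^sup>2 + a))"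
    using sum_mono[of B "\<lambda>i. \<Sum>j\<in>B - {i}. prob (Ag v i \<inter> Ag v j)" "\<lambda>_. 2 * Ds + real (card B) * (p\<^sup>2 + a)"] near
    by simp
  have bon: "prob U \<ge> real (card B) * p - (\<Sum>i\<in>B. \<Sum>j\<in>B - {i}. prob (Ag v i \<inter> Ag v j))"
    using bonferroni[OF B, of "Ag v"] unfolding U_def sumA by simp
  have "real (card B) * (2 * Ds + real (card B) * (p\<^sup>2 + a)) = real (card B) * (2 * Ds) + (real (card B))\<^sup>2 * (p\<^sup>2 + a)"
    by (simp add: algebra_simps power2_eq_square)
  then show "prob {x\<in>space N. \<forall>i\<in>B. \<xi> i x \<le> v} \<le> 1 - real (card B) * prob (Ag v 0)
        + real (card B) * (2 * (\<Sum>d\<in>{1..L}. prob {x\<in>space N. \<xi> 0 x > v \<and> \<xi> (int d) x > v}))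
        + (real (card B))\<^sup>2 * ((prob (Ag v 0))\<^sup>2 + a)"
    using pM dbl bon unfolding p_def[symmetric] Ds_def[symmetric] by linarith
qed

end

lemma sum_min_blocks:
  "(\<Sum>j<K. min r (len - j * r)) = min len (K * r)" for len r :: nat
proof (induction K)
  case 0 then show ?case by simp
next
  case (Suc K)
  show ?case
  proof (cases "len \<le> K * r")
    case True
    then show ?thesis using Suc by (simp add: min_def)
  next
    case False
    have aux: "\<not> len \<le> q \<Longrightarrow> q + min r (len - q) = min len (q + r)" for q :: nat
      unfolding min_def by presburger
    have "(\<Sum>j<Suc K. min r (len - j * r)) = min len (K * r) + min r (len - K * r)" using Suc by simp
    also have "\<dots> = K * r + min r (len - K * r)" using False by simp
    also have "\<dots> = min len (K * r + r)" by (rule aux[OF False])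
    finally show ?thesis by (simp add: add.commute)
  qed
qed

lemma blocks_card_sum:
  fixes xs :: "'a list" and r :: nat
  assumes d: "distinct xs" and r: "r > 0"
  shows "(\<Sum>j\<in>{1..length xs div r + 1}. card (set (take r (drop ((j - 1) * r) xs)))) = length xs"
proof -
  let ?K = "length xs div r + 1"
  have c: "card (set (take r (drop m xs))) = min r (length xs - m)" for m
    using d by (simp add: distinct_card)
  have "(\<Sum>j\<in>{1..?K}. card (set (take r (drop ((j - 1) * r) xs)))) = (\<Sum>j<?K. card (set (take r (drop (j * r) xs))))"
  proof -
    have "{1..?K} = Suc ` {..<?K}" by (simp add: image_Suc_lessThan)
    then show ?thesis by (simp add: sum.reindex)
  qed
  also have "\<dots> = (\<Sum>j<?K. min r (length xs - j * r))" using c by simp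
  also have "\<dots> = min (length xs) (?K * r)" by (rule sum_min_blocks)
  also have "?K * r \<ge> length xs"
  proof -
    have "length xs div r * r + length xs mod r = length xs" by (rule div_mult_mod_eq)
    moreover have "length xs mod r < r" using r by simp
    moreover have "(length xs div r + 1) * r = length xs div r * r + r" by (simp add: algebra_simps)
    ultimately show ?thesis by linarith
  qed
  then have "min (length xs) (?K * r) = length xs" by simp
  finally show ?thesis .
qed

lemma block_card_le: "card (set (take r (drop m xs))) \<le> r"
  by (rule order_trans[OF card_length]) simp

lemma prod_lim:
  fixes x y e :: "nat \<Rightarrow> nat \<Rightarrow> real" and J :: "nat \<Rightarrow> nat set"
  assumes fin: "\<And>n. finite (J n)"
    and ev: "eventually (\<lambda>n. \<forall>j\<in>J n. 0 \<le> x n j \<and> x n j \<le> m n \<and> 1 - x n j \<le> y n j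
               \<and> y n j \<le> 1 - x n j + e n j \<and> 0 \<le> y n j) sequentially"
    and evE: "eventually (\<lambda>n. (\<Sum>j\<in>J n. e n j) \<le> E n) sequentially"
    and S: "(\<lambda>n. \<Sum>j\<in>J n. x n j) \<longlonglongrightarrow> L"
    and m: "m \<longlonglongrightarrow> 0" and E: "E \<longlonglongrightarrow> 0"
  shows "(\<lambda>n. \<Prod>j\<in>J n. y n j) \<longlonglongrightarrow> exp (- L)"
proof (rule tendsto_sandwich)
  define Sx where "Sx n = (\<Sum>j\<in>J n. x n j)" for n
  have "eventually (\<lambda>n. m n < 1 / 2) sequentially"
    using m by (rule order_tendstoD(2)) simp
  then have mh: "eventually (\<lambda>n. m n \<le> 1 / 2) sequentially"
    by (rule eventually_mono) simp
  show "eventually (\<lambda>n. exp (- Sx n - 2 * m n * Sx n) \<le> (\<Prod>j\<in>J n. y n j)) sequentially"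
    using ev mh
  proof eventually_elim
    case (elim n)
    have "exp (- Sx n - 2 * m n * Sx n) \<le> exp (\<Sum>j\<in>J n. - x n j - 2 * (x n j)\<^sup>2)"
    proof -
      have "(\<Sum>j\<in>J n. 2 * (x n j)\<^sup>2) \<le> (\<Sum>j\<in>J n. 2 * m n * x n j)"
      proof (rule sum_mono)
        fix j assume "j \<in> J n"
        then have "0 \<le> x n j" "x n j \<le> m n" using elim by auto
        then show "2 * (x n j)\<^sup>2 \<le> 2 * m n * x n j"
          by (simp add: power2_eq_square mult_right_mono)
      qed
      then have "- Sx n - 2 * m n * Sx n \<le> (\<Sum>j\<in>J n. - x n j - 2 * (x n j)\<^sup>2)"
        unfolding Sx_def by (simp add: sum_subtractf sum_distrib_left sum_negf)
      then show ?thesis by simp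
    qed
    also have "\<dots> = (\<Prod>j\<in>J n. exp (- x n j - 2 * (x n j)\<^sup>2))"
      using fin by (simp add: exp_sum)
    also have "\<dots> \<le> (\<Prod>j\<in>J n. y n j)"
    proof (rule prod_mono)
      fix j assume j: "j \<in> J n"
      then have x: "0 \<le> x n j" "x n j \<le> 1 / 2" using elim by auto
      have "- x n j - 2 * (x n j)\<^sup>2 \<le> ln (1 - x n j)" by (rule ln_one_minus_pos_lower_bound[OF x])
      then have "exp (- x n j - 2 * (x n j)\<^sup>2) \<le> exp (ln (1 - x n j))" by simp
      also have "exp (ln (1 - x n j)) = 1 - x n j" using x by simp
      finally have "exp (- x n j - 2 * (x n j)\<^sup>2) \<le> 1 - x n j" .
      then show "0 \<le> exp (- x n j - 2 * (x n j)\<^sup>2) \<and> exp (- x n j - 2 * (x n j)\<^sup>2) \<le> y n j"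
        using elim j by force
    qed
    finally show ?case .
  qed
  show "eventually (\<lambda>n. (\<Prod>j\<in>J n. y n j) \<le> exp (- Sx n + E n)) sequentially"
    using ev evE
  proof eventually_elim
    case (elim n)
    have "(\<Prod>j\<in>J n. y n j) \<le> (\<Prod>j\<in>J n. exp (- x n j + e n j))"
    proof (rule prod_mono)
      fix j assume j: "j \<in> J n"
      have "1 + (- x n j + e n j) \<le> exp (- x n j + e n j)" by (rule exp_ge_add_one_self)
      moreover have "0 \<le> y n j" "y n j \<le> 1 - x n j + e n j" using elim(1) j by auto
      ultimately show "0 \<le> y n j \<and> y n j \<le> exp (- x n j + e n j)" by linarith
    qed
    also have "\<dots> = exp (\<Sum>j\<in>J n. - x n j + e n j)" using fin by (simp add: exp_sum)
    also have "\<dots> \<le> exp (- Sx n + E n)"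
    proof -
      have "(\<Sum>j\<in>J n. - x n j + e n j) = - Sx n + (\<Sum>j\<in>J n. e n j)"
        unfolding Sx_def by (simp add: sum.distrib sum_negf sum_subtractf)
      then show ?thesis using elim(2) by simp
    qed
    finally show ?case .
  qed
  have Sx: "Sx \<longlonglongrightarrow> L" using S unfolding Sx_def .
  have l1: "(\<lambda>n. - Sx n - 2 * m n * Sx n) \<longlonglongrightarrow> - L - 2 * 0 * L"
    by (intro tendsto_diff tendsto_minus tendsto_mult tendsto_const Sx m)
  show "(\<lambda>n. exp (- Sx n - 2 * m n * Sx n)) \<longlonglongrightarrow> exp (- L)"
    using tendsto_exp[OF l1] by simp
  have l2: "(\<lambda>n. - Sx n + E n) \<longlonglongrightarrow> - L + 0"
    by (intro tendsto_add tendsto_minus Sx E)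
  show "(\<lambda>n. exp (- Sx n + E n)) \<longlonglongrightarrow> exp (- L)"
    using tendsto_exp[OF l2] by simp
qed


lemma rbound:
  fixes k n :: nat
  assumes k: "k \<ge> 2"
  shows "real (n div (k - 1) + 1) \<le> 2 * real n / real k + 1"
proof -
  have "real (n div (k - 1)) \<le> real n / real (k - 1)" by (rule of_nat_div_le_of_nat)
  also have "real n / real (k - 1) = (2 * real n) / (2 * real (k - 1))" by simp
  also have "\<dots> \<le> (2 * real n) / real k"
    using k by (intro divide_left_mono) (auto simp: of_nat_diff)
  finally show ?thesis by simp
qed

context scen
begin

lemma blockmax_le: "blockmax \<xi> B x \<le> ereal v \<longleftrightarrow> (\<forall>i\<in>B. \<xi> i x \<le> v)"
  by (simp add: blockmax_def SUP_le_iff)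

lemma det_main:
  fixes T :: "nat \<Rightarrow> int set" and u :: "nat \<Rightarrow> real" and \<tau> q :: real
    and \<alpha> :: "nat \<Rightarrow> nat \<Rightarrow> real" and l k :: "nat \<Rightarrow> nat"
  assumes finT: "\<And>n. finite (T n)" and cardT: "\<And>n. card (T n) \<le> n"
    and Rlim: "(\<lambda>n. real (card (T n)) / real n) \<longlonglongrightarrow> q"
    and tail: "(\<lambda>n. real n * prob {x\<in>space N. \<xi> 0 x > u n}) \<longlonglongrightarrow> \<tau>"
    and D: "condition_D N \<xi> u \<alpha> l" and D': "condition_D' N \<xi> u \<alpha> l k"
  shows "(\<lambda>n. \<Prod>j\<in>{1..card (T n) div block_len k n + 1}.
       prob {x\<in>space N. blockmax \<xi> (set (take (block_len k n) (drop ((j - 1) * block_len k n)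
           (sorted_list_of_set (T n))))) x \<le> ereal (u n)}) \<longlonglongrightarrow> exp (- \<tau> * q)"
proof -
  define r where "r n = block_len k n" for n
  have r0: "r n > 0" for n unfolding r_def block_len_def by simp
  define xs where "xs n = sorted_list_of_set (T n)" for n
  have lenxs: "length (xs n) = card (T n)" for n unfolding xs_def by simp
  have dxs: "distinct (xs n)" for n unfolding xs_def by simp
  define Bl where "Bl n j = set (take (r n) (drop ((j - 1) * r n) (xs n)))" for n j
  define p where "p n = prob (Ag (u n) 0)" for n
  have p0: "0 \<le> p n" for n unfolding p_def by simp
  have p_eq: "prob {x\<in>space N. \<xi> 0 x > u n} = p n" for n unfolding p_def Ag_def by simp
  define Ds where "Ds n = (\<Sum>d\<in>{1..n div k n}. prob {x\<in>space N. \<xi> 0 x > u n \<and> \<xi> (int d) x > u n})" for n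
  have Ds0: "0 \<le> Ds n" for n unfolding Ds_def by (intro sum_nonneg) simp
  define a where "a n = \<alpha> n (l n)" for n
  have Dall: "\<And>n m I J. finite I \<Longrightarrow> finite J \<Longrightarrow> I \<noteq> {} \<Longrightarrow> J \<noteq> {} \<Longrightarrow>
        Max I < Min J \<Longrightarrow> Min J - Max I \<ge> int m \<Longrightarrow>
        \<bar>Fjoint N \<xi> (I \<union> J) (u n) - Fjoint N \<xi> I (u n) * Fjoint N \<xi> J (u n)\<bar> \<le> \<alpha> n m"
    using D unfolding condition_D_def by blast
  have l0: "l n > 0" for n using D unfolding condition_D_def by blast
  have Dc: "\<bar>Fjoint N \<xi> {i, j} (u n) - Fjoint N \<xi> {i} (u n) * Fjoint N \<xi> {j} (u n)\<bar> \<le> a n"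
    if "i < j" "j - i \<ge> int (l n)" for n i j
    using Dall[of "{i}" "{j}" "l n" n] that unfolding a_def by (simp add: insert_commute)
  have a0: "0 \<le> a n" for n
    using Dc[of 0 "int (l n)" n] l0[of n] by simp
  have kat: "filterlim k at_top sequentially" using D' unfolding condition_D'_def by blast
  have c2: "(\<lambda>n. (real n)\<^sup>2 / real (k n) * a n) \<longlonglongrightarrow> 0" using D' unfolding condition_D'_def a_def by blast
  have c3: "(\<lambda>n. real (k n * l n) / real n) \<longlonglongrightarrow> 0" using D' unfolding condition_D'_def by blast
  have c4: "(\<lambda>n. real n * Ds n) \<longlonglongrightarrow> 0" using D' unfolding condition_D'_def Ds_def by blast
  have np: "(\<lambda>n. real n * p n) \<longlonglongrightarrow> \<tau>" using tail unfolding p_eq .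
  have ik: "(\<lambda>n. 1 / real (k n)) \<longlonglongrightarrow> 0"
  proof -
    have "filterlim (\<lambda>n. real (k n)) at_top sequentially"
      by (rule filterlim_compose[OF filterlim_real_sequentially kat])
    then have "(\<lambda>n. inverse (real (k n))) \<longlonglongrightarrow> 0" by (rule tendsto_inverse_0_at_top)
    then show ?thesis by (simp add: inverse_eq_divide)
  qed
  have ev_k: "eventually (\<lambda>n. k n \<ge> 2) sequentially"
    using kat by (simp add: filterlim_at_top)
  have ev_kl: "eventually (\<lambda>n. real (k n * l n) / real n < 1) sequentially"
    using c3 by (rule order_tendstoD(2)) simp
  have ev_n: "eventually (\<lambda>n. n > 0) sequentially" by (rule eventually_gt_at_top)
  have ev_l: "eventually (\<lambda>n. l n \<le> n div k n) sequentially"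
    using ev_kl ev_n ev_k
  proof eventually_elim
    case (elim n)
    then have "real (k n * l n) < real n" by (simp add: divide_less_eq del: of_nat_mult)
    then have "k n * l n < n" by (simp only: of_nat_less_iff)
    then have "l n * k n \<le> n" by (simp add: mult.commute)
    then show ?case using elim(3) by (simp add: less_eq_div_iff_mult_less_eq)
  qed
  define m where "m n = 2 * (real n * p n) * (1 / real (k n)) + (real n * p n) * (1 / real n)" for n
  define E where "E n = 2 * (real n * Ds n) + 2 * (real n * p n)\<^sup>2 * (1 / real (k n))
      + (real n * p n)\<^sup>2 * (1 / real n) + 2 * ((real n)\<^sup>2 / real (k n) * a n)
      + ((real n)\<^sup>2 / real (k n) * a n) * (real (k n * l n) / real n)" for n
  have mlim: "m \<longlonglongrightarrow> 0"
  proof -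
    have "m \<longlonglongrightarrow> 2 * \<tau> * 0 + \<tau> * 0"
      unfolding m_def[abs_def] by (intro tendsto_intros np ik)
    then show ?thesis by simp
  qed
  have Elim: "E \<longlonglongrightarrow> 0"
  proof -
    have "E \<longlonglongrightarrow> 2 * 0 + 2 * \<tau>\<^sup>2 * 0 + \<tau>\<^sup>2 * 0 + 2 * 0 + 0 * 0"
      unfolding E_def[abs_def] by (intro tendsto_intros np ik c2 c3 c4)
    then show ?thesis by simp
  qed
  have sumcard: "(\<Sum>j\<in>{1..card (T n) div r n + 1}. real (card (Bl n j))) = real (card (T n))" for n
  proof -
    have "(\<Sum>j\<in>{1..card (T n) div r n + 1}. card (Bl n j)) = card (T n)"
      using blocks_card_sum[OF dxs r0, of n n] unfolding Bl_def lenxs .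
    then show ?thesis by (metis of_nat_sum)
  qed
  have cardBl: "card (Bl n j) \<le> r n" for n j unfolding Bl_def by (rule block_card_le)
  have Sx: "(\<lambda>n. \<Sum>j\<in>{1..card (T n) div r n + 1}. real (card (Bl n j)) * p n) \<longlonglongrightarrow> q * \<tau>"
  proof -
    have eq: "(\<Sum>j\<in>{1..card (T n) div r n + 1}. real (card (Bl n j)) * p n)
        = (real (card (T n)) / real n) * (real n * p n)" for n
    proof (cases "n = 0")
      case True
      then have "card (T n) = 0" using cardT[of n] by simp
      then show ?thesis using sumcard[of n] by (simp add: sum_distrib_right[symmetric])
    next
      case False
      then show ?thesis using sumcard[of n] by (simp add: sum_distrib_right[symmetric])
    qed
    show ?thesis unfolding eq by (intro tendsto_mult Rlim np)
  qed
  have main: "(\<lambda>n. \<Prod>j\<in>{1..card (T n) div r n + 1}. prob {x\<in>space N. \<forall>i\<in>Bl n j. \<xi> i x \<le> u n})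
      \<longlonglongrightarrow> exp (- (q * \<tau>))"
  proof (rule prod_lim[where x="\<lambda>n j. real (card (Bl n j)) * p n" and m=m and E=E
        and e="\<lambda>n j. real (card (Bl n j)) * (2 * Ds n) + (real (card (Bl n j)))\<^sup>2 * ((p n)\<^sup>2 + a n)"])
    show "\<And>n. finite {1..card (T n) div r n + 1}" by simp
    show "(\<lambda>n. \<Sum>j\<in>{1..card (T n) div r n + 1}. real (card (Bl n j)) * p n) \<longlonglongrightarrow> q * \<tau>" by (rule Sx)
    show "m \<longlonglongrightarrow> 0" by (rule mlim)
    show "E \<longlonglongrightarrow> 0" by (rule Elim)
    show "eventually (\<lambda>n. \<forall>j\<in>{1..card (T n) div r n + 1}.
        0 \<le> real (card (Bl n j)) * p n \<and> real (card (Bl n j)) * p n \<le> m n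
        \<and> 1 - real (card (Bl n j)) * p n \<le> prob {x\<in>space N. \<forall>i\<in>Bl n j. \<xi> i x \<le> u n}
        \<and> prob {x\<in>space N. \<forall>i\<in>Bl n j. \<xi> i x \<le> u n} \<le> 1 - real (card (Bl n j)) * p n
             + (real (card (Bl n j)) * (2 * Ds n) + (real (card (Bl n j)))\<^sup>2 * ((p n)\<^sup>2 + a n))
        \<and> 0 \<le> prob {x\<in>space N. \<forall>i\<in>Bl n j. \<xi> i x \<le> u n}) sequentially"
      using ev_k ev_l ev_n
    proof eventually_elim
      case (elim n)
      show ?case
      proof
        fix j assume j: "j \<in> {1..card (T n) div r n + 1}"
        have finB: "finite (Bl n j)" unfolding Bl_def by simp
        have bb: "1 - real (card (Bl n j)) * p n \<le> prob {x\<in>space N. \<forall>i\<in>Bl n j. \<xi> i x \<le> u n}"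
          "prob {x\<in>space N. \<forall>i\<in>Bl n j. \<xi> i x \<le> u n} \<le> 1 - real (card (Bl n j)) * p n
             + real (card (Bl n j)) * (2 * Ds n) + (real (card (Bl n j)))\<^sup>2 * ((p n)\<^sup>2 + a n)"
          using block_bounds[OF finB elim(2), of "u n" "a n"] Dc unfolding p_def[symmetric] Ds_def
          by auto
        have "real (card (Bl n j)) * p n \<le> real (r n) * p n"
          using cardBl[of n j] p0[of n] by (intro mult_right_mono) auto
        also have "\<dots> \<le> (2 * real n / real (k n) + 1) * p n"
          using rbound[OF elim(1), of n] p0[of n] unfolding r_def block_len_def by (intro mult_right_mono) auto
        also have "\<dots> = m n" unfolding m_def using elim(1,3) by (simp add: field_simps)
        finally have xm: "real (card (Bl n j)) * p n \<le> m n" .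
        show "0 \<le> real (card (Bl n j)) * p n \<and> real (card (Bl n j)) * p n \<le> m n
          \<and> 1 - real (card (Bl n j)) * p n \<le> prob {x\<in>space N. \<forall>i\<in>Bl n j. \<xi> i x \<le> u n}
          \<and> prob {x\<in>space N. \<forall>i\<in>Bl n j. \<xi> i x \<le> u n} \<le> 1 - real (card (Bl n j)) * p n
             + (real (card (Bl n j)) * (2 * Ds n) + (real (card (Bl n j)))\<^sup>2 * ((p n)\<^sup>2 + a n))
          \<and> 0 \<le> prob {x\<in>space N. \<forall>i\<in>Bl n j. \<xi> i x \<le> u n}"
          using bb xm p0[of n] by simp
      qed
    qed
    show "eventually (\<lambda>n. (\<Sum>j\<in>{1..card (T n) div r n + 1}.
        real (card (Bl n j)) * (2 * Ds n) + (real (card (Bl n j)))\<^sup>2 * ((p n)\<^sup>2 + a n)) \<le> E n) sequentially"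
      using ev_k ev_n
    proof eventually_elim
      case (elim n)
      let ?J = "{1..card (T n) div r n + 1}"
      let ?c = "\<lambda>j. real (card (Bl n j))"
      have pa: "0 \<le> (p n)\<^sup>2 + a n" using a0[of n] by simp
      have "(\<Sum>j\<in>?J. ?c j * (2 * Ds n) + (?c j)\<^sup>2 * ((p n)\<^sup>2 + a n))
          = (\<Sum>j\<in>?J. ?c j) * (2 * Ds n) + (\<Sum>j\<in>?J. (?c j)\<^sup>2) * ((p n)\<^sup>2 + a n)"
        by (simp only: sum.distrib sum_distrib_right)
      also have "(\<Sum>j\<in>?J. (?c j)\<^sup>2) \<le> (\<Sum>j\<in>?J. ?c j * real (r n))"
      proof (rule sum_mono)
        fix j show "(?c j)\<^sup>2 \<le> ?c j * real (r n)"
          using cardBl[of n j] by (simp add: power2_eq_square mult_left_mono)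
      qed
      also have "(\<Sum>j\<in>?J. ?c j * real (r n)) = real (card (T n)) * real (r n)"
        using sumcard[of n] by (simp add: sum_distrib_right[symmetric])
      finally have s1: "(\<Sum>j\<in>?J. ?c j * (2 * Ds n) + (?c j)\<^sup>2 * ((p n)\<^sup>2 + a n))
          \<le> real (card (T n)) * (2 * Ds n) + real (card (T n)) * real (r n) * ((p n)\<^sup>2 + a n)"
        unfolding sumcard using pa by (simp add: mult_right_mono)
      have cT: "real (card (T n)) \<le> real n" using cardT[of n] by simp
      have s2: "real (card (T n)) * (2 * Ds n) \<le> real n * (2 * Ds n)"
        using cT Ds0[of n] by (intro mult_right_mono) auto
      have rb: "real (r n) \<le> 2 * real n / real (k n) + 1"
        using rbound[OF elim(1), of n] unfolding r_def block_len_def by simp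
      have s3: "real (card (T n)) * real (r n) * ((p n)\<^sup>2 + a n)
          \<le> real n * (2 * real n / real (k n) + 1) * ((p n)\<^sup>2 + a n)"
        using cT rb pa by (intro mult_mono) auto
      have kl: "real n * a n \<le> ((real n)\<^sup>2 / real (k n) * a n) * (real (k n * l n) / real n)"
      proof -
        have "((real n)\<^sup>2 / real (k n) * a n) * (real (k n * l n) / real n) = real n * a n * real (l n)"
          using elim(1,2) by (simp add: field_simps power2_eq_square)
        moreover have "real n * a n \<le> real n * a n * real (l n)"
          using mult_left_mono[of 1 "real (l n)" "real n * a n"] l0[of n] a0[of n] by simp
        ultimately show ?thesis by simp
      qed
      have id: "real n * (2 * real n / real (k n) + 1) * ((p n)\<^sup>2 + a n)
          = 2 * (real n * p n)\<^sup>2 * (1 / real (k n)) + (real n * p n)\<^sup>2 * (1 / real n)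
            + 2 * ((real n)\<^sup>2 / real (k n) * a n) + real n * a n"
        using elim(1,2) by (simp add: field_simps power2_eq_square)
      show ?case using s1 s2 s3 kl id unfolding E_def by linarith
    qed
  qed
  have "(\<lambda>n. \<Prod>j\<in>{1..card (T n) div r n + 1}. prob {x\<in>space N. blockmax \<xi> (Bl n j) x \<le> ereal (u n)})
      = (\<lambda>n. \<Prod>j\<in>{1..card (T n) div r n + 1}. prob {x\<in>space N. \<forall>i\<in>Bl n j. \<xi> i x \<le> u n})"
    by (simp add: blockmax_le)
  then show ?thesis using main unfolding Bl_def r_def xs_def by (simp add: mult.commute)
qed

end

lemma walk_psum: "walk X m \<omega> = psum (\<lambda>i. X (Suc i)) m \<omega>"
  unfolding walk_def psum_def by (induction m) simp_all

theorem lemma2: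
  fixes M :: "'a measure" and X :: "nat \<Rightarrow> 'a \<Rightarrow> int" and a :: real
    and N :: "'b measure" and \<xi> :: "int \<Rightarrow> 'b \<Rightarrow> real"
    and u :: "nat \<Rightarrow> real" and \<tau> :: real
    and \<alpha> :: "nat \<Rightarrow> nat \<Rightarrow> real" and l k :: "nat \<Rightarrow> nat"
  assumes M: "prob_space M"
    and X_rv: "\<And>i. i \<ge> 1 \<Longrightarrow> X i \<in> measurable M (count_space UNIV)"
    and X_indep: "prob_space.indep_vars M (\<lambda>_. count_space UNIV) X {1..}"
    and X_ident: "\<And>i. i \<ge> 1 \<Longrightarrow> distr M (count_space UNIV) (X i) = distr M (count_space UNIV) (X 1)"
    and a: "0 < a" "a < 1"
    and attr: "centered_stable_attraction M X a"
    and N: "prob_space N"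
    and \<xi>_rv: "\<And>i. \<xi> i \<in> borel_measurable N"
    and stat: "stationary_field N \<xi>"
    and \<tau>: "\<tau> \<ge> 0"
    and tail: "(\<lambda>n. real n * measure N {x \<in> space N. \<xi> 0 x > u n}) \<longlonglongrightarrow> \<tau>"
    and D: "condition_D N \<xi> u \<alpha> l"
    and D': "condition_D' N \<xi> u \<alpha> l k"
  shows "AE \<omega> in M.
    (\<lambda>n. \<Prod>j\<in>{1..num_blocks X k n \<omega>}.
        measure N {x \<in> space N. blockmax \<xi> (block X k n \<omega> j) x \<le> ereal (u n)})
    \<longlonglongrightarrow> exp (- \<tau> * measure M {\<omega> \<in> space M. \<forall>m\<ge>1. walk X m \<omega> \<noteq> 0})"
proof -
  interpret P: prob_space M by (rule M)
  have Xrv: "X (Suc i) \<in> measurable M (count_space UNIV)" for i using X_rv by simp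
  have ind: "P.indep_vars (\<lambda>_. count_space UNIV) (\<lambda>i. X (Suc i)) UNIV"
  proof -
    let ?F = "\<lambda>i. {X i -` A \<inter> space M | A. A \<in> sets (count_space (UNIV :: int set))}"
    have iF: "P.indep_sets ?F {1..}" using X_indep unfolding P.indep_vars_def2 by blast
    have "P.indep_sets (\<lambda>i. ?F (Suc i)) UNIV"
    proof (rule P.indep_setsI)
      show "\<And>i. i \<in> UNIV \<Longrightarrow> ?F (Suc i) \<subseteq> P.events"
        using Xrv by (auto simp: measurable_sets)
      fix A :: "nat \<Rightarrow> 'a set" and J :: "nat set"
      assume J: "J \<noteq> {}" "J \<subseteq> UNIV" "finite J" and A: "\<forall>j\<in>J. A j \<in> ?F (Suc j)"
      have "P.prob (\<Inter>j\<in>Suc ` J. A (j - 1)) = (\<Prod>j\<in>Suc ` J. P.prob (A (j - 1)))"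
        by (rule P.indep_setsD[OF iF]) (use J A in auto)
      moreover have "(\<Inter>j\<in>Suc ` J. A (j - 1)) = (\<Inter>j\<in>J. A j)" by auto
      moreover have "(\<Prod>j\<in>Suc ` J. P.prob (A (j - 1))) = (\<Prod>j\<in>J. P.prob (A j))"
        by (subst prod.reindex) auto
      ultimately show "P.prob (\<Inter>j\<in>J. A j) = (\<Prod>j\<in>J. P.prob (A j))" by simp
    qed
    then show ?thesis unfolding P.indep_vars_def2 using Xrv by simp
  qed
  have Xid: "distr M (count_space UNIV) (X (Suc i)) = distr M (count_space UNIV) (X (Suc 0))" for i
  proof -
    have "distr M (count_space UNIV) (X (Suc i)) = distr M (count_space UNIV) (X 1)"
      by (rule X_ident) simp
    then show ?thesis by (simp only: One_nat_def)
  qed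
  interpret Z: iidseq M "\<lambda>i. X (Suc i)"
    by (intro iidseq.intro M iidseq_axioms.intro Xrv ind Xid)
  interpret S: scen N \<xi>
    by (intro scen.intro N scen_axioms.intro \<xi>_rv stat)
  have q: "Z.qinf = measure M {\<omega> \<in> space M. \<forall>m\<ge>1. walk X m \<omega> \<noteq> 0}"
    unfolding Z.qinf_def walk_psum ..
  show ?thesis
    using Z.range_lim
  proof eventually_elim
    case (elim \<omega>)
    let ?T = "\<lambda>n. walk_range X n \<omega>"
    have Teq: "?T n = (\<lambda>j. psum (\<lambda>i. X (Suc i)) j \<omega>) ` {1..n}" for n
      unfolding walk_range_def walk_psum ..
    have finT: "finite (?T n)" for n unfolding walk_range_def by simp
    have cardT: "card (?T n) \<le> n" for n
      unfolding walk_range_def using card_image_le[of "{1..n}" "\<lambda>j. walk X j \<omega>"] by simp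
    have Rlim: "(\<lambda>n. real (card (?T n)) / real n) \<longlonglongrightarrow> Z.qinf"
      unfolding Teq using elim .
    have "(\<lambda>n. \<Prod>j\<in>{1..card (?T n) div block_len k n + 1}.
       measure N {x\<in>space N. blockmax \<xi> (set (take (block_len k n) (drop ((j - 1) * block_len k n)
           (sorted_list_of_set (?T n))))) x \<le> ereal (u n)}) \<longlonglongrightarrow> exp (- \<tau> * Z.qinf)"
      by (rule S.det_main[OF finT cardT Rlim tail D D'])
    then show ?case unfolding q num_blocks_def block_def .
  qed
qed


end
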